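(* Let $(\mathbb{F}(t),\sigma)$ be a $\Pi\Sigma$-extension of $(\mathbb{F},\sigma)$, let $A_0,\dots,A_\ell\in\mathbb{F}[t]^{n\times n}$, $b\in\mathbb{F}[t]^n$, and let $A=A_\ell\sigma^\ell+\dots+A_1\sigma+A_0\in\mathbb{F}(t)[\sigma]^{n\times n}$ be such that the system $A(y)=b$ is fully regular. Let $P\in\mathrm{GL}_n(\mathbb{F}(t)[\sigma,\sigma^{-1}])$ be such that $PA=\tilde A_{\tilde\ell}\sigma^{\tilde\ell}+\dots+\tilde A_1\sigma+\tilde A_0$ with $\tilde A_0,\dots,\tilde A_{\tilde\ell}\in\mathbb{F}[t]^{n\times n}$, $P(b)\in\mathbb{F}[t]^n$ and $\det\tilde A_0\ne0$. Let $m\in\mathbb{F}[t]\setminus\{0\}$ be the common denominator of the entries of $A_\ell^{-1}$ and $p\in\mathbb{F}[t]\setminus\{0\}$ the common denominator of the entries of $\tilde A_0^{-1}$. Let $y=d^{-1}z\in\mathbb{F}(t)^n$ be a solution of $A(y)=b$ in reduced representation. Then $$\mathrm{disp}(\operatorname{ap}(d))\le \mathrm{disp}\big(\sigma^{-\ell}(\operatorname{ap}(m)),\operatorname{ap}(p)\big)=:D$$ and $$\operatorname{ap}(d)\;\Big|\;\gcd\Big(\prod_{j=0}^{D}\sigma^{-\ell-j}(\operatorname{ap}(m)),\ \prod_{j=0}^{D}\sigma^{j}(\operatorname{ap}(p))\Big).$$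
   Context: All fields contain $\mathbb{Q}$. A difference field $(\mathbb{F},\sigma)$ is a field with an automorphism $\sigma$; $\mathrm{const}\,\mathbb{F}=\{c:\sigma(c)=c\}$. A $\Pi\Sigma$-extension $(\mathbb{F}(t),\sigma)$ of $(\mathbb{F},\sigma)$: $\mathbb{F}(t)$ is a rational function field, $\sigma$ extends to an automorphism of $\mathbb{F}(t)$ with either $\sigma(t)=t+\beta$, $\beta\in\mathbb{F}\setminus\{0\}$ ($\Sigma$-monomial) or $\sigma(t)=\alpha t$, $\alpha\in\mathbb{F}\setminus\{0\}$ ($\Pi$-monomial), and $\mathrm{const}\,\mathbb{F}(t)=\mathrm{const}\,\mathbb{F}$. For $a,b\in\mathbb{F}[t]\setminus\{0\}$: $\mathrm{spread}(a,b)=\{k\ge0:\gcd(a,\sigma^k(b))\notin\mathbb{F}\}$, $\mathrm{disp}(a,b)=\max\mathrm{spread}(a,b)$ ($\max\emptyset=-\infty$, max of an infinite set $=\infty$), $\mathrm{disp}(a)=\mathrm{disp}(a,a)$; empty products equal $1$. $\mathrm{per}(a)=1$ if $t$ is a $\Sigma$-monomial, $\mathrm{per}(a)=t^\mu$ with $\mu$ maximal such that $t^\mu\mid a$ if $t$ is a $\Pi$-monomial; $\operatorname{ap}(a)=a/\mathrm{per}(a)$. A reduced representation $y=d^{-1}z$ has $d\in\mathbb{F}[t]\setminus\{0\}$, $z\in\mathbb{F}[t]^n$, $\gcd(z_1,\dots,z_n,d)=1$. Ore polynomials: $\mathbb{F}(t)[\sigma]$ is the ring of polynomials $\sum a_i\sigma^i$,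 $a_i\in\mathbb{F}(t)$, with usual addition and multiplication determined by $\sigma\cdot a=\sigma(a)\cdot\sigma$; $\mathbb{F}(t)[\sigma,\sigma^{-1}]$ is its localisation at the powers of $\sigma$ (Ore Laurent polynomials). An operator $L=\sum a_i\sigma^i$ acts on $\alpha\in\mathbb{F}(t)$ by $L(\alpha)=\sum a_i\sigma^i(\alpha)$; a matrix $L=(L_{ij})$ of operators acts on a vector $\alpha=(\alpha_j)$ by $L(\alpha)=(\sum_j L_{ij}(\alpha_j))_i$. A square operator matrix is unimodular if it has a two-sided inverse over the same ring; $\mathrm{GL}_n(\cdot)$ denotes unimodular matrices. A system $A(y)=b$ with $A=\sum_{i=0}^\ell A_i\sigma^i$, $A_i$ square $n\times n$, is head regular if $\det A_\ell\ne0$, tail regular if $\det A_0\ne0$, and fully regular if it is head regular and there exists $P\in\mathrm{GL}_n(\mathbb{F}(t)[\sigma,\sigma^{-1}])$ such that $PA\in\mathbb{F}(t)[\sigma]^{n\times n}$ and the system $(PA)(\tilde y)=P(b)$ is tail regular. *)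

theory Defs
  imports "HOL-Computational_Algebra.Computational_Algebra"
          "HOL-Computational_Algebra.Normalized_Fraction"
          "HOL-Library.Extended_Real"
          "Jordan_Normal_Form.Determinant"
begin

text \<open>The ground field F is the type 'a (a field of characteristic 0, so it contains Q).
  The rational function field F(t) is the fraction field of 'a poly.\<close>

type_synonym 'a ratfun = "'a poly fract"

definition polyK :: "'a::field_gcd poly \<Rightarrow> 'a ratfun" where
  "polyK p = Fract p 1"

definition tK :: "'a::field_gcd ratfun" where
  "tK = polyK [:0, 1:]"

definition inF :: "'a::field_gcd ratfun \<Rightarrow> bool" where
  "inF x \<longleftrightarrow> (\<exists>c. x = polyK [:c:])"

definition inFt :: "'a::field_gcd ratfun \<Rightarrow> bool" where
  "inFt x \<longleftrightarrow> (\<exists>p. x = polyK p)"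

definition sigma_pow :: "('a \<Rightarrow> 'a) \<Rightarrow> int \<Rightarrow> 'a \<Rightarrow> 'a" where
  "sigma_pow sg k = (if 0 \<le> k then sg ^^ (nat k) else (inv_into UNIV sg) ^^ (nat (- k)))"

definition PiSigma_ext :: "('a::{field_char_0,field_gcd} ratfun \<Rightarrow> 'a ratfun) \<Rightarrow> bool" where
  "PiSigma_ext sg \<longleftrightarrow>
     bij sg \<and> (\<forall>x y. sg (x + y) = sg x + sg y) \<and> (\<forall>x y. sg (x * y) = sg x * sg y) \<and> sg 1 = 1
     \<and> sg ` {x. inF x} = {x. inF x}
     \<and> ((\<exists>\<beta>. inF \<beta> \<and> \<beta> \<noteq> 0 \<and> sg tK = tK + \<beta>) \<or> (\<exists>\<alpha>. inF \<alpha> \<and> \<alpha> \<noteq> 0 \<and> sg tK = \<alpha> * tK))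
     \<and> (\<forall>x. sg x = x \<longrightarrow> inF x)"

definition is_Pi :: "('a::field_gcd ratfun \<Rightarrow> 'a ratfun) \<Rightarrow> bool" where
  "is_Pi sg \<longleftrightarrow> (\<exists>\<alpha>. inF \<alpha> \<and> \<alpha> \<noteq> 0 \<and> sg tK = \<alpha> * tK)"

text \<open>sigma^k applied to a polynomial (the result is again a polynomial in a Pi-Sigma-extension).\<close>
definition sigma_poly :: "('a::field_gcd ratfun \<Rightarrow> 'a ratfun) \<Rightarrow> int \<Rightarrow> 'a poly \<Rightarrow> 'a poly" where
  "sigma_poly sg k p = (THE q. polyK q = sigma_pow sg k (polyK p))"

definition spread :: "('a::field_gcd ratfun \<Rightarrow> 'a ratfun) \<Rightarrow> 'a poly \<Rightarrow> 'a poly \<Rightarrow> nat set" where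
  "spread sg a b = {k. degree (gcd a (sigma_poly sg (int k) b)) \<noteq> 0}"

text \<open>disp: max of spread, -infinity for the empty set, infinity for an infinite set.\<close>
definition disp :: "('a::field_gcd ratfun \<Rightarrow> 'a ratfun) \<Rightarrow> 'a poly \<Rightarrow> 'a poly \<Rightarrow> ereal" where
  "disp sg a b = Sup ((\<lambda>k. ereal (real k)) ` spread sg a b)"

definition per :: "('a::field_gcd ratfun \<Rightarrow> 'a ratfun) \<Rightarrow> 'a poly \<Rightarrow> 'a poly" where
  "per sg a = (if is_Pi sg then monom 1 (GREATEST \<mu>. monom 1 \<mu> dvd a) else 1)"

definition ap :: "('a::field_gcd ratfun \<Rightarrow> 'a ratfun) \<Rightarrow> 'a poly \<Rightarrow> 'a poly" where
  "ap sg a = a div per sg a"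

definition common_denom :: "'a::field_gcd ratfun mat \<Rightarrow> 'a poly" where
  "common_denom B = Lcm {snd (quot_of_fract (B $$ (i, j))) | i j. i < dim_row B \<and> j < dim_col B}"

text \<open>Matrices of Ore Laurent polynomials, represented as sum_k M_k sigma^k with
  M :: int => n x n matrix over F(t), of finite support.\<close>
type_synonym 'a opmat = "int \<Rightarrow> 'a ratfun mat"

definition is_opmat :: "nat \<Rightarrow> 'a::field_gcd opmat \<Rightarrow> bool" where
  "is_opmat n M \<longleftrightarrow> (\<forall>k. M k \<in> carrier_mat n n) \<and> finite {k. M k \<noteq> 0\<^sub>m n n}"

definition is_ore_opmat :: "nat \<Rightarrow> 'a::field_gcd opmat \<Rightarrow> bool" where
  "is_ore_opmat n M \<longleftrightarrow> is_opmat n M \<and> (\<forall>k<0. M k = 0\<^sub>m n n)"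

definition opmat_mult :: "('a::field_gcd ratfun \<Rightarrow> 'a ratfun) \<Rightarrow> nat \<Rightarrow> 'a opmat \<Rightarrow> 'a opmat \<Rightarrow> 'a opmat" where
  "opmat_mult sg n M N = (\<lambda>k. mat n n (\<lambda>(r, c).
      \<Sum>i\<in>{i. M i \<noteq> 0\<^sub>m n n}. (M i * map_mat (sigma_pow sg i) (N (k - i))) $$ (r, c)))"

definition opmat_one :: "nat \<Rightarrow> 'a::field_gcd opmat" where
  "opmat_one n = (\<lambda>k. if k = 0 then 1\<^sub>m n else 0\<^sub>m n n)"

definition unimodular :: "('a::field_gcd ratfun \<Rightarrow> 'a ratfun) \<Rightarrow> nat \<Rightarrow> 'a opmat \<Rightarrow> bool" where
  "unimodular sg n P \<longleftrightarrow> is_opmat n P \<and>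
     (\<exists>Q. is_opmat n Q \<and> opmat_mult sg n P Q = opmat_one n \<and> opmat_mult sg n Q P = opmat_one n)"

definition opmat_apply :: "('a::field_gcd ratfun \<Rightarrow> 'a ratfun) \<Rightarrow> nat \<Rightarrow> 'a opmat \<Rightarrow> 'a ratfun vec \<Rightarrow> 'a ratfun vec" where
  "opmat_apply sg n M v = vec n (\<lambda>r.
      \<Sum>k\<in>{k. M k \<noteq> 0\<^sub>m n n}. (M k *\<^sub>v map_vec (sigma_pow sg k) v) $ r)"

definition opmat_of_polys :: "nat \<Rightarrow> nat \<Rightarrow> (nat \<Rightarrow> 'a::field_gcd poly mat) \<Rightarrow> 'a opmat" where
  "opmat_of_polys n l A = (\<lambda>k. if 0 \<le> k \<and> k \<le> int l then map_mat polyK (A (nat k)) else 0\<^sub>m n n)"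

definition head_regular :: "nat \<Rightarrow> nat \<Rightarrow> 'a::field_gcd opmat \<Rightarrow> bool" where
  "head_regular n l M \<longleftrightarrow> det (M (int l)) \<noteq> 0"

definition tail_regular :: "nat \<Rightarrow> 'a::field_gcd opmat \<Rightarrow> bool" where
  "tail_regular n M \<longleftrightarrow> det (M 0) \<noteq> 0"

definition fully_regular :: "('a::field_gcd ratfun \<Rightarrow> 'a ratfun) \<Rightarrow> nat \<Rightarrow> nat \<Rightarrow> 'a opmat \<Rightarrow> bool" where
  "fully_regular sg n l M \<longleftrightarrow> head_regular n l M \<and>
     (\<exists>P. unimodular sg n P \<and> is_ore_opmat n (opmat_mult sg n P M)
          \<and> tail_regular n (opmat_mult sg n P M))"

end

theory Submission
  imports Defs
begin

lemma polyK_eq: "polyK = to_fract"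
  by (rule ext) (simp add: polyK_def to_fract_def)

lemma polyK_simps[simp]:
  "polyK (a+b) = polyK a + polyK b" "polyK (a*b) = polyK a * polyK b"
  "polyK 0 = 0" "polyK 1 = 1" "polyK (-a) = - polyK a" "polyK (a - b) = polyK a - polyK b"
  "polyK a = polyK b \<longleftrightarrow> a = b" "polyK a = 0 \<longleftrightarrow> a = 0"
  by (simp_all add: polyK_eq)

lemma polyK_power[simp]: "polyK (a ^ k) = polyK a ^ k"
  by (induct k) auto

lemma polyK_prod[simp]: "polyK (prod f S) = (\<Prod>x\<in>S. polyK (f x))"
  by (induct S rule: infinite_finite_induct) auto

lemma polyK_sum[simp]: "polyK (sum f S) = (\<Sum>x\<in>S. polyK (f x))"
  by (induct S rule: infinite_finite_induct) auto

lemma polyK_pCons: "polyK (pCons a p) = polyK [:a:] + tK * polyK p"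
proof -
  have "pCons a p = [:a:] + [:0,1:] * p" by (simp add: pCons_eq_iff)
  then show ?thesis unfolding tK_def by (metis polyK_simps(1,2))
qed

lemma inF_const[simp]: "inF (polyK [:c:])" by (auto simp: inF_def)
lemma inFt_polyK[simp]: "inFt (polyK p)" by (auto simp: inFt_def)

lemma inF_add: "inF x \<Longrightarrow> inF y \<Longrightarrow> inF (x + y)"
proof -
  assume "inF x" "inF y"
  then obtain a b where "x = polyK [:a:]" "y = polyK [:b:]" by (auto simp: inF_def)
  then have "x + y = polyK [:a + b:]" by (simp only: polyK_simps(1)[symmetric]) simp
  then show ?thesis by simp
qed
lemma inF_mult: "inF x \<Longrightarrow> inF y \<Longrightarrow> inF (x * y)"
proof -
  assume "inF x" "inF y"
  then obtain a b where "x = polyK [:a:]" "y = polyK [:b:]" by (auto simp: inF_def)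
  then have "x * y = polyK [:a * b:]" by (simp only: polyK_simps(2)[symmetric]) simp
  then show ?thesis by simp
qed

lemma inF_inverse: "inF x \<Longrightarrow> inF (inverse x)"
proof -
  assume "inF x"
  then obtain c where c: "x = polyK [:c:]" by (auto simp: inF_def)
  show ?thesis
  proof (cases "c = 0")
    case True then show ?thesis using c by (auto simp: inF_def intro: exI[of _ 0])
  next
    case False
    have "polyK [:c:] * polyK [:inverse c:] = polyK [:c * inverse c:]"
      by (simp only: polyK_simps(2)[symmetric]) simp
    also have "\<dots> = 1" using False by (simp add: one_pCons[symmetric])
    finally have "inverse x = polyK [:inverse c:]" using c by (simp add: inverse_unique)
    then show ?thesis by simp
  qed
qed

lemma inFt_add: "inFt x \<Longrightarrow> inFt y \<Longrightarrow> inFt (x + y)"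
  unfolding inFt_def by (metis polyK_simps(1))
lemma inFt_mult: "inFt x \<Longrightarrow> inFt y \<Longrightarrow> inFt (x * y)"
  unfolding inFt_def by (metis polyK_simps(2))
lemma inF_inFt: "inF x \<Longrightarrow> inFt x" unfolding inF_def inFt_def by auto
lemma inFt_tK: "inFt tK" by (simp add: tK_def)

lemma hom_inFt:
  assumes h: "field_hom h" and F: "\<And>x. inF x \<Longrightarrow> inF (h x)" and t: "inFt (h tK)"
  shows "inFt (h (polyK p))"
proof -
  interpret field_hom h by fact
  show ?thesis
  proof (induct p)
    case 0
    then show ?case by (metis inFt_polyK polyK_simps(3) hom_zero)
  next
    case (pCons a p)
    then show ?case
      unfolding polyK_pCons[of a p] hom_add hom_mult by (simp add: inFt_add inFt_mult F inF_inFt t)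
  qed
qed

lemma inF_uminus: "inF x \<Longrightarrow> inF (- x)"
proof -
  assume "inF x"
  then obtain a where "x = polyK [:a:]" by (auto simp: inF_def)
  then have "- x = polyK [:- a:]" by (simp only: polyK_simps(5)[symmetric]) simp
  then show ?thesis by simp
qed

lemma field_hom_comp: "field_hom f \<Longrightarrow> field_hom g \<Longrightarrow> field_hom (f \<circ> g)"
proof -
  assume f: "field_hom f" and g: "field_hom g"
  interpret f: field_hom f by fact
  interpret g: field_hom g by fact
  show ?thesis by unfold_locales (auto simp: f.hom_add g.hom_add f.hom_mult g.hom_mult)
qed

lemma field_hom_id: "field_hom id" by unfold_locales auto

locale pse =
  fixes sg :: "'a::{field_char_0,field_gcd} ratfun \<Rightarrow> 'a ratfun"
  assumes ext: "PiSigma_ext sg"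
begin

abbreviation isg where "isg \<equiv> inv_into UNIV sg"

lemma bij_sg: "bij sg" using ext by (simp add: PiSigma_ext_def)
lemma isg_sg[simp]: "isg (sg x) = x" using bij_sg by (simp add: bij_def inv_into_f_f)
lemma sg_isg[simp]: "sg (isg x) = x" using bij_sg by (simp add: bij_def f_inv_into_f)
lemma sg_inj: "sg x = sg y \<longleftrightarrow> x = y" using bij_sg by (metis isg_sg)

lemma fh_sg: "field_hom sg"
proof -
  have a: "sg (x+y) = sg x + sg y" "sg (x * y) = sg x * sg y" "sg 1 = 1" for x y
    using ext by (auto simp: PiSigma_ext_def)
  have "sg 0 + sg 0 = sg 0 + 0" using a(1)[of 0 0] by simp
  then have z: "sg 0 = 0" by (rule add_left_imp_eq)
  show ?thesis by unfold_locales (auto simp: a z)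
qed

lemma fh_isg: "field_hom isg"
proof -
  interpret field_hom sg by (rule fh_sg)
  have a: "isg (x+y) = isg x + isg y" "isg (x * y) = isg x * isg y" "isg 1 = 1" "isg 0 = 0" for x y
    by (metis sg_inj sg_isg hom_add hom_mult hom_one hom_zero)+
  show ?thesis by unfold_locales (auto simp: a)
qed

lemma sp_succ: "sigma_pow sg (k+1) x = sg (sigma_pow sg k x)"
proof (cases "0 \<le> k")
  case True
  then have "nat (k+1) = Suc (nat k)" by simp
  then show ?thesis using True by (simp add: sigma_pow_def)
next
  case False
  then have m: "nat (-k) = Suc (nat (-(k+1)))" by simp
  show ?thesis
  proof (cases "k = -1")
    case True then show ?thesis by (simp add: sigma_pow_def)
  next
    case False
    with \<open>\<not> 0 \<le> k\<close> have "\<not> 0 \<le> k + 1" by simp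
    then show ?thesis using \<open>\<not> 0 \<le> k\<close> m by (simp add: sigma_pow_def)
  qed
qed

lemma sp_pred: "sigma_pow sg (k-1) x = isg (sigma_pow sg k x)"
  using sp_succ[of "k-1" x] by simp

lemma sp_0[simp]: "sigma_pow sg 0 x = x" by (simp add: sigma_pow_def)
lemma sp_1: "sigma_pow sg 1 x = sg x" using sp_succ[of 0 x] by simp

lemma sp_add: "sigma_pow sg (j+k) x = sigma_pow sg j (sigma_pow sg k x)"
proof (induct j rule: int_induct[where k=0])
  case base then show ?case by simp
next
  case (step1 i)
  then show ?case by (metis add.commute add.left_commute sp_succ)
next
  case (step2 i)
  then show ?case by (metis diff_add_eq sp_pred)
qed

lemma fh_spw: "field_hom (sigma_pow sg k)"
proof (induct k rule: int_induct[where k=0])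
  case base then show ?case by (simp add: field_hom_id[unfolded id_def])
next
  case (step1 i)
  have "sigma_pow sg (i+1) = sg \<circ> sigma_pow sg i" by (simp add: fun_eq_iff sp_succ)
  then show ?case using field_hom_comp[OF fh_sg step1(2)] by (simp only:)
next
  case (step2 i)
  have "sigma_pow sg (i-1) = isg \<circ> sigma_pow sg i" by (simp add: fun_eq_iff sp_pred)
  then show ?case using field_hom_comp[OF fh_isg step2(2)] by (simp only:)
qed

lemma sg_inF: "inF x \<Longrightarrow> inF (sg x)"
  using ext unfolding PiSigma_ext_def by blast

lemma isg_inF: "inF x \<Longrightarrow> inF (isg x)"
proof -
  assume "inF x"
  then have "x \<in> sg ` {x. inF x}" using ext unfolding PiSigma_ext_def by auto
  then obtain y where "inF y" "x = sg y" by auto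
  then show ?thesis by simp
qed

lemma sg_tK: "inFt (sg tK)"
proof -
  have "(\<exists>\<beta>. inF \<beta> \<and> \<beta> \<noteq> 0 \<and> sg tK = tK + \<beta>) \<or> (\<exists>\<alpha>. inF \<alpha> \<and> \<alpha> \<noteq> 0 \<and> sg tK = \<alpha> * tK)"
    using ext unfolding PiSigma_ext_def by blast
  then show ?thesis using inFt_add[OF inFt_tK inF_inFt] inFt_mult[OF inF_inFt inFt_tK] by auto
qed

lemma isg_tK: "inFt (isg tK)"
proof -
  interpret field_hom isg by (rule fh_isg)
  have "(\<exists>\<beta>. inF \<beta> \<and> \<beta> \<noteq> 0 \<and> sg tK = tK + \<beta>) \<or> (\<exists>\<alpha>. inF \<alpha> \<and> \<alpha> \<noteq> 0 \<and> sg tK = \<alpha> * tK)"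
    using ext unfolding PiSigma_ext_def by blast
  then show ?thesis
  proof
    assume "\<exists>\<beta>. inF \<beta> \<and> \<beta> \<noteq> 0 \<and> sg tK = tK + \<beta>"
    then obtain \<beta> where b: "inF \<beta>" "sg tK = tK + \<beta>" by blast
    then have "tK = isg tK + isg \<beta>" by (metis isg_sg hom_add)
    then have "isg tK = tK + (- isg \<beta>)" by (simp add: algebra_simps)
    then show ?thesis using b by (metis inFt_add inF_inFt inFt_tK isg_inF inF_uminus)
  next
    assume "\<exists>\<alpha>. inF \<alpha> \<and> \<alpha> \<noteq> 0 \<and> sg tK = \<alpha> * tK"
    then obtain \<alpha> where a: "inF \<alpha>" "\<alpha> \<noteq> 0" "sg tK = \<alpha> * tK" by blast
    then have "tK = isg \<alpha> * isg tK" by (metis isg_sg hom_mult)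
    moreover have "isg \<alpha> \<noteq> 0" using a(2) by (metis hom_zero sg_isg)
    ultimately have "isg tK = inverse (isg \<alpha>) * tK" by (simp add: field_simps)
    then show ?thesis using a by (metis inFt_mult inF_inFt inFt_tK isg_inF inF_inverse)
  qed
qed

lemma spw_inF: "inF x \<Longrightarrow> inF (sigma_pow sg k x)"
proof (induct k rule: int_induct[where k=0])
  case base then show ?case by simp
next
  case (step1 i) then show ?case by (simp add: sp_succ sg_inF)
next
  case (step2 i) then show ?case by (simp add: sp_pred isg_inF)
qed

lemma spw_inFt: "inFt (sigma_pow sg k (polyK p))"
proof (induct k arbitrary: p rule: int_induct[where k=0])
  case base then show ?case by simp
next
  case (step1 i)
  then obtain q where "sigma_pow sg i (polyK p) = polyK q" by (auto simp: inFt_def)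
  then show ?case using hom_inFt[OF fh_sg sg_inF sg_tK] by (simp add: sp_succ)
next
  case (step2 i)
  then obtain q where "sigma_pow sg i (polyK p) = polyK q" by (auto simp: inFt_def)
  then show ?case using hom_inFt[OF fh_isg isg_inF isg_tK] by (simp add: sp_pred)
qed

abbreviation sp where "sp \<equiv> sigma_poly sg"

lemma polyK_sp: "polyK (sp k p) = sigma_pow sg k (polyK p)"
proof -
  obtain q where q: "sigma_pow sg k (polyK p) = polyK q" using spw_inFt[of k p] by (auto simp: inFt_def)
  have "sp k p = q" unfolding sigma_poly_def q by (rule the_equality) auto
  then show ?thesis using q by simp
qed

lemma sp_eqI: "sigma_pow sg k (polyK p) = polyK q \<Longrightarrow> sp k p = q"
  using polyK_sp by (metis polyK_simps(7))

lemma idom_hom_sp: "idom_hom (sp k)"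
proof -
  interpret field_hom "sigma_pow sg k" by (rule fh_spw)
  show ?thesis by unfold_locales (auto intro!: sp_eqI simp: polyK_sp hom_add hom_mult)
qed

lemma sp_comp: "sp j (sp k p) = sp (j + k) p"
  by (intro sp_eqI) (simp add: polyK_sp sp_add)

lemma sp_id[simp]: "sp 0 p = p"
  by (intro sp_eqI) simp

lemma sp_inv[simp]: "sp (-k) (sp k p) = p" "sp k (sp (-k) p) = p"
  by (simp_all add: sp_comp)

lemma sp_eq_iff: "sp k p = sp k q \<longleftrightarrow> p = q"
  by (metis sp_inv(1))

end

context pse begin

lemma sp_hom: "sp k (a*b) = sp k a * sp k b" "sp k (a+b) = sp k a + sp k b" "sp k 1 = 1" "sp k 0 = 0"
  "sp k (- a) = - sp k a" "sp k (a - b) = sp k a - sp k b" "sp k (a ^ m) = sp k a ^ m"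
  "sp k (prod f S) = (\<Prod>x\<in>S. sp k (f x))"
proof -
  interpret idom_hom "sp k" by (rule idom_hom_sp)
  show "sp k (a*b) = sp k a * sp k b" "sp k (a+b) = sp k a + sp k b" "sp k 1 = 1" "sp k 0 = 0"
  "sp k (- a) = - sp k a" "sp k (a - b) = sp k a - sp k b" "sp k (a ^ m) = sp k a ^ m"
  "sp k (prod f S) = (\<Prod>x\<in>S. sp k (f x))"
    by (simp_all add: hom_mult hom_add hom_uminus hom_minus hom_power hom_prod)
qed

lemma sp_eq_0_iff[simp]: "sp k p = 0 \<longleftrightarrow> p = 0"
  by (metis sp_eq_iff sp_hom(4))

lemma sp_dvd: "a dvd b \<Longrightarrow> sp k a dvd sp k b"
proof -
  interpret idom_hom "sp k" by (rule idom_hom_sp)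
  show "a dvd b \<Longrightarrow> sp k a dvd sp k b" by (rule hom_dvd)
qed

lemma sp_dvd_iff: "sp k a dvd sp k b \<longleftrightarrow> a dvd b"
  by (metis sp_dvd sp_inv(1))

lemma sp_unit_iff: "is_unit (sp k a) \<longleftrightarrow> is_unit a"
  by (metis sp_dvd_iff sp_hom(3))

lemma sp_prime_elem: "prime_elem p \<Longrightarrow> prime_elem (sp k p)"
proof -
  assume p: "prime_elem p"
  have "sp k p dvd a \<or> sp k p dvd b" if "sp k p dvd a * b" for a b
  proof -
    have "sp k p dvd sp k (sp (-k) a * sp (-k) b)" using that by (simp add: sp_hom)
    then have "p dvd sp (-k) a * sp (-k) b" by (simp add: sp_dvd_iff)
    then have "p dvd sp (-k) a \<or> p dvd sp (-k) b" using p by (simp add: prime_elem_def)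
    then show ?thesis by (metis sp_dvd_iff sp_inv(2))
  qed
  then show ?thesis using p unfolding prime_elem_def by (auto simp: sp_unit_iff[of k p, unfolded])
qed

lemma sp_multiplicity: "multiplicity (sp k g) (sp k a) = multiplicity g a"
proof -
  have "{n. sp k g ^ n dvd sp k a} = {n. g ^ n dvd a}"
    by (auto simp: sp_hom(7)[symmetric] sp_dvd_iff)
  then show ?thesis by (simp add: multiplicity_def)
qed

lemma sp_const: "\<exists>c'. sp k [:c:] = [:c':]"
proof -
  have "inF (sigma_pow sg k (polyK [:c:]))" by (rule spw_inF) simp
  then obtain c' where "sigma_pow sg k (polyK [:c:]) = polyK [:c':]" by (auto simp: inF_def)
  then show ?thesis by (metis sp_eqI)
qed

definition sF :: "'a \<Rightarrow> 'a" where "sF c = coeff (sp 1 [:c:]) 0"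

lemma sp1_const: "sp 1 [:c:] = [:sF c:]"
  using sp_const[of 1 c] unfolding sF_def by auto

lemma fh_sF: "field_hom sF"
proof -
  have 1: "sF (a + b) = sF a + sF b" for a b
  proof -
    have "[:sF (a+b):] = sp 1 ([:a:] + [:b:])" by (simp add: sp1_const)
    also have "\<dots> = [:sF a + sF b:]" by (simp only: sp_hom sp1_const) simp
    finally show ?thesis by simp
  qed
  have 2: "sF (a * b) = sF a * sF b" for a b
  proof -
    have e: "[:a:] * [:b:] = [:a * b:]" by simp
    have "[:sF (a*b):] = sp 1 ([:a:] * [:b:])" by (simp only: e sp1_const)
    also have "\<dots> = [:sF a:] * [:sF b:]" by (simp only: sp_hom sp1_const)
    also have "\<dots> = [:sF a * sF b:]" by simp
    finally show ?thesis by simp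
  qed
  have 3: "sF 1 = 1"
  proof -
    have "sp 1 [:1:] = [:1:]" using sp_hom(3)[of 1] by (simp only: one_pCons)
    then show ?thesis using sp1_const[of 1] by simp
  qed
  have 4: "sF 0 = 0"
  proof -
    show ?thesis using sp1_const[of 0] sp_hom(4)[of 1] by (metis pCons_0_0 pCons_eq_iff)
  qed
  show ?thesis by unfold_locales (auto simp: 1 2 3 4)
qed

lemma sp1_pcompose: "sp 1 u = pcompose (map_poly sF u) (sp 1 [:0,1:])"
proof (induct u)
  case 0 then show ?case by (simp add: sp_hom)
next
  case (pCons a p)
  have z: "sF 0 = 0" using fh_sF by (metis field_hom.axioms idom_hom.axioms comm_ring_hom.axioms ring_hom.axioms semiring_hom.axioms(1) comm_monoid_add_hom.axioms monoid_add_hom.axioms(1) zero_hom.hom_zero)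
  have "pCons a p = [:a:] + [:0,1:] * p" by (simp add: pCons_eq_iff)
  then have "sp 1 (pCons a p) = sp 1 ([:a:] + [:0,1:] * p)" by simp
  also have "\<dots> = [:sF a:] + sp 1 [:0,1:] * sp 1 p" by (simp only: sp_hom sp1_const)
  finally have "sp 1 (pCons a p) = [:sF a:] + sp 1 [:0,1:] * sp 1 p" .
  then show ?case using pCons by (simp add: map_poly_pCons z pcompose_pCons)
qed

lemma pderiv_map_sF: "pderiv (map_poly sF u) = map_poly sF (pderiv u)"
proof -
  interpret field_hom sF by (rule fh_sF)
  show ?thesis by (rule poly_eqI) (simp add: coeff_pderiv coeff_map_poly hom_mult hom_of_nat del: of_nat_Suc)
qed

lemma sp1_t_cases: "(\<exists>b0. sp 1 [:0,1:] = [:b0, 1:]) \<or> (is_Pi sg \<and> (\<exists>a0. a0 \<noteq> 0 \<and> sp 1 [:0,1:] = [:0, a0:]))"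
proof -
  have "(\<exists>\<beta>. inF \<beta> \<and> \<beta> \<noteq> 0 \<and> sg tK = tK + \<beta>) \<or> (\<exists>\<alpha>. inF \<alpha> \<and> \<alpha> \<noteq> 0 \<and> sg tK = \<alpha> * tK)"
    using ext unfolding PiSigma_ext_def by blast
  then show ?thesis
  proof
    assume "\<exists>\<beta>. inF \<beta> \<and> \<beta> \<noteq> 0 \<and> sg tK = tK + \<beta>"
    then obtain b0 where "sg tK = tK + polyK [:b0:]" by (auto simp: inF_def)
    then have "sigma_pow sg 1 (polyK [:0,1:]) = polyK [:0,1:] + polyK [:b0:]" by (simp add: sp_1 tK_def)
    then have "sigma_pow sg 1 (polyK [:0,1:]) = polyK ([:0,1:] + [:b0:])" by (simp only: polyK_simps(1))
    then have "sp 1 [:0,1:] = [:0,1:] + [:b0:]" by (rule sp_eqI)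
    then have "sp 1 [:0,1:] = [:b0, 1:]" by simp
    then show ?thesis by blast
  next
    assume a: "\<exists>\<alpha>. inF \<alpha> \<and> \<alpha> \<noteq> 0 \<and> sg tK = \<alpha> * tK"
    then have pi: "is_Pi sg" by (simp add: is_Pi_def)
    from a obtain a0 where a0: "a0 \<noteq> 0" "sg tK = polyK [:a0:] * tK" by (auto simp: inF_def)
    then have "sigma_pow sg 1 (polyK [:0,1:]) = polyK [:a0:] * polyK [:0,1:]" by (simp add: sp_1 tK_def)
    then have "sigma_pow sg 1 (polyK [:0,1:]) = polyK ([:a0:] * [:0,1:])" by (simp only: polyK_simps(2))
    then have "sp 1 [:0,1:] = [:a0:] * [:0,1:]" by (rule sp_eqI)
    then have "sp 1 [:0,1:] = [:0, a0:]" by simp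
    then show ?thesis using pi a0 by blast
  qed
qed

lemma is_Pi_t: "is_Pi sg \<Longrightarrow> \<exists>a0. a0 \<noteq> 0 \<and> sp 1 [:0,1:] = [:0, a0:]"
proof -
  assume "is_Pi sg"
  then obtain \<alpha> where "inF \<alpha>" "\<alpha> \<noteq> 0" "sg tK = \<alpha> * tK" by (auto simp: is_Pi_def)
  then obtain a0 where a0: "a0 \<noteq> 0" "sg tK = polyK [:a0:] * tK" by (auto simp: inF_def)
  then have "sigma_pow sg 1 (polyK [:0,1:]) = polyK [:a0:] * polyK [:0,1:]" by (simp add: sp_1 tK_def)
    then have "sigma_pow sg 1 (polyK [:0,1:]) = polyK ([:a0:] * [:0,1:])" by (simp only: polyK_simps(2))
  then have "sp 1 [:0,1:] = [:a0:] * [:0,1:]" by (rule sp_eqI)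
  then have "sp 1 [:0,1:] = [:0, a0:]" by simp
  then show ?thesis using a0 by blast
qed

abbreviation tt :: "'a poly" where "tt \<equiv> [:0,1:]"

lemma is_Pi_sp_t: "is_Pi sg \<Longrightarrow> sp k tt dvd tt \<and> tt dvd sp k tt"
proof -
  assume pi: "is_Pi sg"
  then obtain a0 where a0: "a0 \<noteq> 0" "sp 1 tt = [:0, a0:]" using is_Pi_t by blast
  have e: "[:0, a0:] = Polynomial.smult a0 tt" by simp
  have e1: "[:0, a0:] = [:a0:] * tt" by simp
  have e2: "tt = [:inverse a0:] * [:0, a0:]" using a0(1) by simp
  have one: "sp 1 tt dvd tt \<and> tt dvd sp 1 tt"
    unfolding a0(2) by (metis e1 e2 dvd_triv_right)
  have mone: "sp (-1) tt dvd tt \<and> tt dvd sp (-1) tt"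
    using one sp_dvd[of "sp 1 tt" tt "-1"] sp_dvd[of tt "sp 1 tt" "-1"] by simp
  show ?thesis
  proof (induct k rule: int_induct[where k=0])
    case base then show ?case by simp
  next
    case (step1 i)
    have "sp (i+1) tt = sp 1 (sp i tt)" by (simp add: sp_comp add.commute)
    moreover have "sp 1 (sp i tt) dvd sp 1 tt" "sp 1 tt dvd sp 1 (sp i tt)"
      using step1(2) by (auto intro: sp_dvd)
    ultimately show ?case using one by (auto intro: dvd_trans)
  next
    case (step2 i)
    have "sp (i-1) tt = sp (-1) (sp i tt)" by (simp add: sp_comp)
    moreover have "sp (-1) (sp i tt) dvd sp (-1) tt" "sp (-1) tt dvd sp (-1) (sp i tt)"
      using step2(2) by (auto intro: sp_dvd)
    ultimately show ?case using mone by (auto intro: dvd_trans)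
  qed
qed

definition nt :: "'a poly \<Rightarrow> bool" where "nt g \<longleftrightarrow> \<not> (is_Pi sg \<and> g dvd tt)"

lemma nt_sp: "nt g \<Longrightarrow> nt (sp k g)"
proof -
  assume a: "nt g"
  show ?thesis unfolding nt_def
  proof
    assume b: "is_Pi sg \<and> sp k g dvd tt"
    then have "g dvd sp (-k) tt" using sp_dvd[of "sp k g" tt "-k"] by simp
    then have "g dvd tt" using is_Pi_sp_t[of "-k"] b by (auto intro: dvd_trans)
    then show False using a b by (simp add: nt_def)
  qed
qed

end

lemma greatest_order: "(a::'a::field poly) \<noteq> 0 \<Longrightarrow> (GREATEST \<mu>. monom 1 \<mu> dvd a) = order 0 a"
  by (rule Greatest_equality) (simp_all add: monom_1_dvd_iff)

lemma prime_elem_dvd_prime_elem: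
  fixes p q :: "'a::field poly"
  assumes p: "prime_elem p" and q: "prime_elem q" and d: "p dvd q"
  shows "q dvd p"
proof -
  obtain r where r: "q = p * r" using d by (auto elim: dvdE)
  have "q dvd p * r" unfolding r[symmetric] by simp
  then have "q dvd p \<or> q dvd r" using prime_elem_dvd_mult_iff[OF q] by blast
  then show ?thesis
  proof
    assume "q dvd r"
    then obtain s where "r = q * s" by (auto elim: dvdE)
    with r have "q * 1 = q * (p * s)" by (simp add: algebra_simps)
    moreover have "q \<noteq> 0" using q by auto
    ultimately have "p * s = 1" using mult_left_cancel[of q "p * s" 1] by simp
    then have "is_unit p" by (metis dvd_triv_left)
    then show ?thesis using p by (simp add: prime_elem_def)
  qed simp
qed

context pse begin

lemma per_pi: "is_Pi sg \<Longrightarrow> a \<noteq> 0 \<Longrightarrow> per sg a = tt ^ order 0 a"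
  unfolding per_def using greatest_order[of a] by (simp add: monom_altdef)

lemma per_nonpi: "\<not> is_Pi sg \<Longrightarrow> per sg a = 1"
  by (simp add: per_def)

lemma per_dvd: "a \<noteq> 0 \<Longrightarrow> per sg a dvd a"
proof (cases "is_Pi sg")
  case True
  assume a: "a \<noteq> 0"
  have "monom 1 (order 0 a) dvd a" using a by (simp add: monom_1_dvd_iff)
  then show ?thesis using True a by (simp add: per_pi monom_altdef)
qed (simp add: per_nonpi)

lemma ap_eq: "a \<noteq> 0 \<Longrightarrow> a = per sg a * ap sg a"
  by (simp add: ap_def per_dvd)

lemma ap_nz: "a \<noteq> 0 \<Longrightarrow> ap sg a \<noteq> 0"
  using ap_eq by force

lemma ap_dvd: "a \<noteq> 0 \<Longrightarrow> ap sg a dvd a"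
  by (metis ap_eq dvd_triv_right)

lemma ap_not_t: "is_Pi sg \<Longrightarrow> a \<noteq> 0 \<Longrightarrow> \<not> tt dvd ap sg a"
proof
  assume pi: "is_Pi sg" and a: "a \<noteq> 0" and d: "tt dvd ap sg a"
  have "tt ^ Suc (order 0 a) = tt ^ order 0 a * tt" by (simp only: power_Suc2)
  also have "\<dots> dvd per sg a * ap sg a"
    unfolding per_pi[OF pi a] by (rule mult_dvd_mono[OF dvd_refl d])
  finally have "tt ^ Suc (order 0 a) dvd per sg a * ap sg a" .
  then have "monom 1 (Suc (order 0 a)) dvd a" using ap_eq[OF a] by (simp add: monom_altdef)
  then show False using a by (simp add: monom_1_dvd_iff)
qed

lemma mult_ap: "prime_elem g \<Longrightarrow> nt g \<Longrightarrow> a \<noteq> 0 \<Longrightarrow> multiplicity g (ap sg a) = multiplicity g a"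
proof (cases "is_Pi sg")
  case True
  assume g: "prime_elem g" "nt g" and a: "a \<noteq> 0"
  have ng: "\<not> g dvd tt" using g True by (simp add: nt_def)
  have "multiplicity g a = multiplicity g (tt ^ order 0 a * ap sg a)"
    using ap_eq[OF a] per_pi[OF True a] by simp
  also have "\<dots> = multiplicity g (tt ^ order 0 a) + multiplicity g (ap sg a)"
    using g a ap_nz by (intro prime_elem_multiplicity_mult_distrib) auto
  also have "multiplicity g (tt ^ order 0 a) = 0"
    using g ng by (simp add: prime_elem_multiplicity_power_distrib not_dvd_imp_multiplicity_0)
  finally show ?thesis by simp
qed (simp add: ap_def per_nonpi)

lemma sg_div_polyK: "sg (polyK a / polyK b) = polyK (sp 1 a) / polyK (sp 1 b)"
proof -
  interpret field_hom "sigma_pow sg 1" by (rule fh_spw)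
  show ?thesis by (simp add: sp_1[symmetric] hom_div polyK_sp)
qed

lemma const_quot:
  assumes "sp 1 a = a * h" "sp 1 b = b * h" "h \<noteq> 0" "b \<noteq> 0"
  shows "\<exists>e. a = [:e:] * b"
proof -
  let ?x = "polyK a / polyK b"
  have "sg ?x = ?x" using assms by (simp add: sg_div_polyK)
  then have "inF ?x" using ext by (simp add: PiSigma_ext_def)
  then obtain e where "?x = polyK [:e:]" by (auto simp: inF_def)
  then have "polyK a = polyK b * polyK [:e:]" using assms(4) by (simp add: field_simps)
  then have "polyK a = polyK (b * [:e:])" by (simp only: polyK_simps(2))
  then have "a = b * [:e:]" by (simp only: polyK_simps(7))
  then show ?thesis by (metis mult.commute)
qed

lemma no_hyper:
  assumes u: "degree u > 0" and h: "sp 1 u = u * [:h0:]" "h0 \<noteq> 0"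
  shows "is_Pi sg \<and> u = monom (coeff u (degree u)) (degree u)"
proof -
  have unz: "u \<noteq> 0" using u by auto
  have hnz: "[:h0:] \<noteq> 0" using h by simp
  from sp1_t_cases show ?thesis
  proof
    assume "\<exists>b0. sp 1 tt = [:b0, 1:]"
    then obtain b0 where s: "sp 1 tt = [:b0, 1:]" by blast
    have "sp 1 (pderiv u) = pderiv (sp 1 u)"
      by (simp add: sp1_pcompose[of "pderiv u"] sp1_pcompose[of u] pderiv_pcompose pderiv_map_sF s pderiv_pCons)
    also have "\<dots> = pderiv u * [:h0:]" by (simp add: h pderiv_mult pderiv_pCons pderiv_smult)
    finally obtain e where e: "pderiv u = [:e:] * u"
      using const_quot[OF _ h(1) hnz unz] by blast
    show ?thesis
    proof (cases "e = 0")
      case True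
      then have "pderiv u = 0" using e by simp
      then show ?thesis using u by (simp add: pderiv_eq_0_iff)
    next
      case False
      then have "degree (pderiv u) = degree u" using e by (simp add: degree_mult_eq)
      then show ?thesis using u by (simp add: degree_pderiv)
    qed
  next
    assume "is_Pi sg \<and> (\<exists>a0. a0 \<noteq> 0 \<and> sp 1 tt = [:0, a0:])"
    then obtain a0 where pi: "is_Pi sg" and s: "sp 1 tt = [:0, a0:]" by blast
    have "sp 1 (tt * pderiv u) = sp 1 tt * sp 1 (pderiv u)" by (rule sp_hom(1))
    also have "\<dots> = [:0,a0:] * pcompose (map_poly sF (pderiv u)) [:0,a0:]"
      by (simp only: sp1_pcompose[of "pderiv u"] s)
    also have "\<dots> = tt * pderiv (sp 1 u)"
      by (simp add: sp1_pcompose[of u] s pderiv_pcompose pderiv_map_sF pderiv_pCons)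
    also have "\<dots> = (tt * pderiv u) * [:h0:]" by (simp add: h pderiv_mult pderiv_pCons pderiv_smult)
    finally obtain e where e: "tt * pderiv u = [:e:] * u"
      using const_quot[OF _ h(1) hnz unz] by blast
    have c: "of_nat i * coeff u i = e * coeff u i" for i
    proof -
      have A: "coeff (tt * pderiv u) i = of_nat i * coeff u i"
        by (cases i) (simp_all add: coeff_pderiv)
      have B: "coeff (tt * pderiv u) i = e * coeff u i" unfolding e by simp
      show ?thesis using A B by simp
    qed
    let ?N = "degree u"
    have lc: "coeff u ?N \<noteq> 0" using unz by simp
    have eN: "e = of_nat ?N" using c[of ?N] lc by simp
    have "u = monom (coeff u ?N) ?N"
    proof (rule poly_eqI)
      fix i
      show "coeff u i = coeff (monom (coeff u ?N) ?N) i"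
      proof (cases "i = ?N")
        case False
        have "coeff u i = 0"
        proof (rule ccontr)
          assume "coeff u i \<noteq> 0"
          then have "(of_nat i :: 'a) = of_nat ?N" using c[of i] eN by simp
          then show False using False by simp
        qed
        then show ?thesis using False by (simp add: coeff_monom)
      qed (simp add: coeff_monom)
    qed
    then show ?thesis using pi by blast
  qed
qed

lemma aperiodic_pos:
  assumes f: "prime_elem f" "nt f" and k: "k > 0" and d: "f dvd sp (int k) f"
  shows False
proof -
  have d2: "sp (int k) f dvd f" using prime_elem_dvd_prime_elem[OF f(1) sp_prime_elem[OF f(1)] d] .
  obtain h where hf: "sp (int k) f = f * h" using d by (auto elim: dvdE)
  obtain r where "f = sp (int k) f * r" using d2 by (auto elim: dvdE)
  then have "f * 1 = f * (h * r)" using hf by (simp add: algebra_simps)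
  moreover have "f \<noteq> 0" using f(1) by auto
  ultimately have "h * r = 1" by simp
  then have hu: "is_unit h" by (metis dvd_triv_left)
  then obtain h0 where h0': "h = [:h0:]" "is_unit h0" by (auto simp: is_unit_poly_iff)
  then have h0: "h = [:h0:]" "h0 \<noteq> 0" by auto
  define u where "u = (\<Prod>i<k. sp (int i) f)"
  have P1: "(\<Prod>i<Suc k. sp (int i) f) = sp (int 0) f * (\<Prod>i<k. sp (int (Suc i)) f)"
    by (rule prod.lessThan_Suc_shift)
  have P2: "(\<Prod>i<Suc k. sp (int i) f) = (\<Prod>i<k. sp (int i) f) * sp (int k) f"
    by (rule prod.lessThan_Suc)
  have S: "sp 1 u = (\<Prod>i<k. sp (int (Suc i)) f)" unfolding u_def by (simp add: sp_hom sp_comp)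
  have "sp 1 u * f = sp (int 0) f * (\<Prod>i<k. sp (int (Suc i)) f)" using S by (simp add: mult.commute)
  also have "\<dots> = (\<Prod>i<Suc k. sp (int i) f)" by (rule P1[symmetric])
  also have "\<dots> = u * sp (int k) f" unfolding u_def by (rule P2)
  finally have "sp 1 u * f = (u * h) * f" using hf by (simp add: algebra_simps)
  moreover have "f \<noteq> 0" using f(1) by auto
  ultimately have "sp 1 u = u * h" using mult_right_cancel[of f "sp 1 u" "u * h"] by blast
  then have su: "sp 1 u = u * [:h0:]" using h0 by simp
  have "sp (int 0) f dvd (\<Prod>i<k. sp (int i) f)" using k by (intro dvd_prodI) auto
  then have fu: "f dvd u" unfolding u_def by simp
  have unz: "u \<noteq> 0" unfolding u_def using f(1) by (auto simp: prod_zero_iff)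
  have "\<not> is_unit u" using fu f(1) by (metis dvd_trans prime_elem_def)
  then have "degree u > 0" using unz by (metis gr0I is_unit_iff_degree)
  from no_hyper[OF this su h0(2)] have pi: "is_Pi sg" and um: "u = monom (coeff u (degree u)) (degree u)" by auto
  have "u = Polynomial.smult (coeff u (degree u)) (tt ^ degree u)" using um by (metis monom_altdef)
  then have "f dvd tt ^ degree u" using fu unz by (metis dvd_smult_cancel leading_coeff_0_iff)
  then have "f dvd tt" using f(1) prime_elem_dvd_power by blast
  then show False using f(2) pi by (simp add: nt_def)
qed

lemma aperiodic:
  assumes f: "prime_elem f" "nt f" and d: "f dvd sp k f"
  shows "k = 0"
proof (rule ccontr)
  assume k: "k \<noteq> 0"
  show False
  proof (cases "k > 0")
    case True
    then show False using aperiodic_pos[OF f, of "nat k"] d by simp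
  next
    case False
    then have k': "-k > 0" using k by simp
    have "sp k f dvd f" using prime_elem_dvd_prime_elem[OF f(1) sp_prime_elem[OF f(1)] d] .
    then have "sp (-k) (sp k f) dvd sp (-k) f" by (rule sp_dvd)
    then have "f dvd sp (int (nat (-k))) f" using k' by simp
    then show False using aperiodic_pos[OF f, of "nat (-k)"] k' by simp
  qed
qed

end

lemma mv: "A \<in> carrier_mat n n \<Longrightarrow> w \<in> carrier_vec n \<Longrightarrow> r < n \<Longrightarrow>
  (A *\<^sub>v w) $ r = (\<Sum>c\<in>{0..<n}. A $$ (r,c) * w $ c)"
  by (simp add: scalar_prod_def)

lemma reindex_shift:
  fixes g :: "int \<Rightarrow> 'b::comm_monoid_add"
  assumes K: "finite K" and sub: "(\<lambda>j. i + j) ` SM \<subseteq> K" and z: "\<And>k. k \<in> K \<Longrightarrow> k - i \<notin> SM \<Longrightarrow> g k = 0"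
  shows "(\<Sum>k\<in>K. g k) = (\<Sum>j\<in>SM. g (i + j))"
proof -
  have "(\<Sum>j\<in>SM. g (i + j)) = (\<Sum>k\<in>(\<lambda>j. i + j) ` SM. g k)"
    by (subst sum.reindex) (auto simp: inj_on_def)
  also have "\<dots> = (\<Sum>k\<in>K. g k)"
  proof (rule sum.mono_neutral_left[OF K sub], rule ballI)
    fix k assume "k \<in> K - (\<lambda>j. i + j) ` SM"
    then have "k \<in> K" "k - i \<notin> SM" by (auto simp: image_iff)
    then show "g k = 0" by (rule z)
  qed
  finally show ?thesis by simp
qed

lemma swap3: "(\<Sum>c\<in>C. \<Sum>i\<in>I. \<Sum>s\<in>S. f c i s) = (\<Sum>i\<in>I. \<Sum>s\<in>S. \<Sum>c\<in>C. (f c i s :: 'b::comm_monoid_add))"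
proof -
  have "(\<Sum>c\<in>C. \<Sum>i\<in>I. \<Sum>s\<in>S. f c i s) = (\<Sum>i\<in>I. \<Sum>c\<in>C. \<Sum>s\<in>S. f c i s)" by (rule sum.swap)
  also have "\<dots> = (\<Sum>i\<in>I. \<Sum>s\<in>S. \<Sum>c\<in>C. f c i s)" by (rule sum.cong[OF refl], rule sum.swap)
  finally show ?thesis .
qed

context pse begin

lemma spw_hom: "sigma_pow sg k (x * y) = sigma_pow sg k x * sigma_pow sg k y"
  "sigma_pow sg k (x + y) = sigma_pow sg k x + sigma_pow sg k y"
  "sigma_pow sg k 0 = 0" "sigma_pow sg k 1 = 1"
  "sigma_pow sg k (sum f S) = (\<Sum>x\<in>S. sigma_pow sg k (f x))"
  "sigma_pow sg k (x - y) = sigma_pow sg k x - sigma_pow sg k y"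
  "sigma_pow sg k (x / y) = sigma_pow sg k x / sigma_pow sg k y"
  "sigma_pow sg k (- x) = - sigma_pow sg k x"
proof -
  interpret field_hom "sigma_pow sg k" by (rule fh_spw)
  show "sigma_pow sg k (x * y) = sigma_pow sg k x * sigma_pow sg k y"
  "sigma_pow sg k (x + y) = sigma_pow sg k x + sigma_pow sg k y"
  "sigma_pow sg k 0 = 0" "sigma_pow sg k 1 = 1"
  "sigma_pow sg k (sum f S) = (\<Sum>x\<in>S. sigma_pow sg k (f x))"
  "sigma_pow sg k (x - y) = sigma_pow sg k x - sigma_pow sg k y"
  "sigma_pow sg k (x / y) = sigma_pow sg k x / sigma_pow sg k y"
  "sigma_pow sg k (- x) = - sigma_pow sg k x"
    by (simp_all add: hom_mult hom_add hom_sum hom_minus hom_div hom_uminus)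
qed

lemma apply_S:
  assumes M: "is_opmat n M" and S: "finite S" "{k. M k \<noteq> 0\<^sub>m n n} \<subseteq> S" and v: "v \<in> carrier_vec n"
  shows "opmat_apply sg n M v = vec n (\<lambda>r. \<Sum>k\<in>S. \<Sum>c\<in>{0..<n}. M k $$ (r,c) * sigma_pow sg k (v $ c))"
proof (rule eq_vecI)
  fix r assume "r < dim_vec (vec n (\<lambda>r. \<Sum>k\<in>S. \<Sum>c\<in>{0..<n}. M k $$ (r,c) * sigma_pow sg k (v $ c)))"
  then have r: "r < n" by simp
  have Mc: "M k \<in> carrier_mat n n" for k using M by (simp add: is_opmat_def)
  have "opmat_apply sg n M v $ r = (\<Sum>k\<in>{k. M k \<noteq> 0\<^sub>m n n}. (M k *\<^sub>v map_vec (sigma_pow sg k) v) $ r)"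
    using r by (simp add: opmat_apply_def)
  also have "\<dots> = (\<Sum>k\<in>{k. M k \<noteq> 0\<^sub>m n n}. \<Sum>c\<in>{0..<n}. M k $$ (r,c) * sigma_pow sg k (v $ c))"
  proof (rule sum.cong[OF refl])
    fix k
    have "(M k *\<^sub>v map_vec (sigma_pow sg k) v) $ r = (\<Sum>c\<in>{0..<n}. M k $$ (r,c) * map_vec (sigma_pow sg k) v $ c)"
      using mv[OF Mc[of k] _ r, of "map_vec (sigma_pow sg k) v"] v by simp
    also have "\<dots> = (\<Sum>c\<in>{0..<n}. M k $$ (r,c) * sigma_pow sg k (v $ c))"
      using v by (intro sum.cong refl) auto
    finally show "(M k *\<^sub>v map_vec (sigma_pow sg k) v) $ r = (\<Sum>c\<in>{0..<n}. M k $$ (r,c) * sigma_pow sg k (v $ c))" .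
  qed
  also have "\<dots> = (\<Sum>k\<in>S. \<Sum>c\<in>{0..<n}. M k $$ (r,c) * sigma_pow sg k (v $ c))"
  proof (rule sum.mono_neutral_left[OF S(1) S(2)], rule ballI)
    fix k assume "k \<in> S - {k. M k \<noteq> 0\<^sub>m n n}"
    then have "M k = 0\<^sub>m n n" by simp
    then show "(\<Sum>c\<in>{0..<n}. M k $$ (r,c) * sigma_pow sg k (v $ c)) = 0" using r by simp
  qed
  finally show "opmat_apply sg n M v $ r = vec n (\<lambda>r. \<Sum>k\<in>S. \<Sum>c\<in>{0..<n}. M k $$ (r,c) * sigma_pow sg k (v $ c)) $ r"
    using r by simp
qed (simp add: opmat_apply_def)

lemma apply_mult:
  assumes P: "is_opmat n P" and M: "is_opmat n M" and v: "v \<in> carrier_vec n"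
  shows "opmat_apply sg n (opmat_mult sg n P M) v = opmat_apply sg n P (opmat_apply sg n M v)"
proof -
  define SP where "SP = {k. P k \<noteq> 0\<^sub>m n n}"
  define SM where "SM = {k. M k \<noteq> 0\<^sub>m n n}"
  define K where "K = (\<lambda>(i,j). i + j) ` (SP \<times> SM)"
  have fSP: "finite SP" using P by (simp add: is_opmat_def SP_def)
  have fSM: "finite SM" using M by (simp add: is_opmat_def SM_def)
  have fK: "finite K" using fSP fSM by (simp add: K_def)
  have Pc: "P k \<in> carrier_mat n n" for k using P by (simp add: is_opmat_def)
  have Mc: "M k \<in> carrier_mat n n" for k using M by (simp add: is_opmat_def)
  let ?PM = "opmat_mult sg n P M"
  have PMe: "?PM k $$ (r,c) = (\<Sum>i\<in>SP. \<Sum>s\<in>{0..<n}. P i $$ (r,s) * sigma_pow sg i (M (k-i) $$ (s,c)))"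
    if "r < n" "c < n" for k r c
  proof -
    have "?PM k $$ (r,c) = (\<Sum>i\<in>SP. (P i * map_mat (sigma_pow sg i) (M (k - i))) $$ (r, c))"
      using that by (simp add: opmat_mult_def SP_def)
    also have "\<dots> = (\<Sum>i\<in>SP. \<Sum>s\<in>{0..<n}. P i $$ (r,s) * sigma_pow sg i (M (k-i) $$ (s,c)))"
    proof (rule sum.cong[OF refl])
      fix i
      have d: "P i \<in> carrier_mat n n" "M (k - i) \<in> carrier_mat n n" using Pc Mc by auto
      show "(P i * map_mat (sigma_pow sg i) (M (k - i))) $$ (r, c) = (\<Sum>s\<in>{0..<n}. P i $$ (r,s) * sigma_pow sg i (M (k-i) $$ (s,c)))"
        using d that by (auto simp: scalar_prod_def intro!: sum.cong)
    qed
    finally show ?thesis .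
  qed
  have PMc: "?PM k \<in> carrier_mat n n" for k by (simp add: opmat_mult_def)
  have PMz: "?PM k = 0\<^sub>m n n" if "k \<notin> K" for k
  proof (rule eq_matI)
    fix r c assume rc: "r < dim_row (0\<^sub>m n n :: 'a ratfun mat)" "c < dim_col (0\<^sub>m n n :: 'a ratfun mat)"
    have "\<And>i. i \<in> SP \<Longrightarrow> M (k - i) = 0\<^sub>m n n"
    proof -
      fix i assume "i \<in> SP"
      then have "k - i \<notin> SM" using that unfolding K_def by (auto simp: image_iff) (metis add.commute diff_add_cancel)
      then show "M (k - i) = 0\<^sub>m n n" by (simp add: SM_def)
    qed
    then show "?PM k $$ (r,c) = 0\<^sub>m n n $$ (r,c)" using rc by (simp add: PMe spw_hom)
  qed (auto simp: opmat_mult_def)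
  have suppPM: "{k. ?PM k \<noteq> 0\<^sub>m n n} \<subseteq> K" using PMz by blast
  have PMop: "is_opmat n ?PM" unfolding is_opmat_def using PMc suppPM fK by (auto intro: finite_subset)
  define u where "u = opmat_apply sg n M v"
  have u: "u = vec n (\<lambda>s. \<Sum>j\<in>SM. \<Sum>c\<in>{0..<n}. M j $$ (s,c) * sigma_pow sg j (v $ c))"
    unfolding u_def by (rule apply_S[OF M fSM _ v]) (simp add: SM_def)
  have uc: "u \<in> carrier_vec n" by (simp add: u)
  have L: "opmat_apply sg n ?PM v = vec n (\<lambda>r. \<Sum>k\<in>K. \<Sum>c\<in>{0..<n}. ?PM k $$ (r,c) * sigma_pow sg k (v $ c))"
    by (rule apply_S[OF PMop fK suppPM v])
  have R: "opmat_apply sg n P u = vec n (\<lambda>r. \<Sum>i\<in>SP. \<Sum>s\<in>{0..<n}. P i $$ (r,s) * sigma_pow sg i (u $ s))"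
    by (rule apply_S[OF P fSP _ uc]) (simp add: SP_def)
  show ?thesis unfolding u_def[symmetric] L R
  proof (rule eq_vecI)
    fix r assume "r < dim_vec (vec n (\<lambda>r. \<Sum>i\<in>SP. \<Sum>s\<in>{0..<n}. P i $$ (r,s) * sigma_pow sg i (u $ s)))"
    then have r: "r < n" by simp
    define X where "X i j s c = P i $$ (r,s) * sigma_pow sg i (M j $$ (s,c)) * sigma_pow sg (i + j) (v $ c)" for i j s c
    have "(\<Sum>k\<in>K. \<Sum>c\<in>{0..<n}. ?PM k $$ (r,c) * sigma_pow sg k (v $ c))
        = (\<Sum>k\<in>K. \<Sum>c\<in>{0..<n}. \<Sum>i\<in>SP. \<Sum>s\<in>{0..<n}. X i (k - i) s c)"
      using r by (intro sum.cong refl) (simp add: PMe X_def sum_distrib_right)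
    also have "\<dots> = (\<Sum>k\<in>K. \<Sum>i\<in>SP. \<Sum>s\<in>{0..<n}. \<Sum>c\<in>{0..<n}. X i (k - i) s c)"
      by (rule sum.cong[OF refl], rule swap3)
    also have "\<dots> = (\<Sum>i\<in>SP. \<Sum>k\<in>K. \<Sum>s\<in>{0..<n}. \<Sum>c\<in>{0..<n}. X i (k - i) s c)"
      by (rule sum.swap)
    also have "\<dots> = (\<Sum>i\<in>SP. \<Sum>j\<in>SM. \<Sum>s\<in>{0..<n}. \<Sum>c\<in>{0..<n}. X i j s c)"
    proof (rule sum.cong[OF refl])
      fix i assume i: "i \<in> SP"
      show "(\<Sum>k\<in>K. \<Sum>s\<in>{0..<n}. \<Sum>c\<in>{0..<n}. X i (k - i) s c) = (\<Sum>j\<in>SM. \<Sum>s\<in>{0..<n}. \<Sum>c\<in>{0..<n}. X i j s c)"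
      proof (subst reindex_shift[OF fK])
        show "(\<lambda>j. i + j) ` SM \<subseteq> K" using i unfolding K_def by auto
        show "(\<Sum>s\<in>{0..<n}. \<Sum>c\<in>{0..<n}. X i (k - i) s c) = 0" if "k \<in> K" "k - i \<notin> SM" for k
          using that by (simp add: X_def SM_def spw_hom)
      qed simp
    qed
    also have "\<dots> = (\<Sum>i\<in>SP. \<Sum>s\<in>{0..<n}. P i $$ (r,s) * sigma_pow sg i (u $ s))"
    proof (rule sum.cong[OF refl])
      fix i assume i: "i \<in> SP"
      have "(\<Sum>s\<in>{0..<n}. P i $$ (r,s) * sigma_pow sg i (u $ s))
          = (\<Sum>s\<in>{0..<n}. \<Sum>j\<in>SM. \<Sum>c\<in>{0..<n}. X i j s c)"
        by (intro sum.cong refl) (simp add: u X_def spw_hom sp_add sum_distrib_left mult.assoc)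
      also have "\<dots> = (\<Sum>j\<in>SM. \<Sum>s\<in>{0..<n}. \<Sum>c\<in>{0..<n}. X i j s c)"
        by (rule sum.swap)
      finally show "(\<Sum>j\<in>SM. \<Sum>s\<in>{0..<n}. \<Sum>c\<in>{0..<n}. X i j s c) = (\<Sum>s\<in>{0..<n}. P i $$ (r,s) * sigma_pow sg i (u $ s))" by simp
    qed
    finally show "vec n (\<lambda>r. \<Sum>k\<in>K. \<Sum>c\<in>{0..<n}. ?PM k $$ (r,c) * sigma_pow sg k (v $ c)) $ r
      = vec n (\<lambda>r. \<Sum>i\<in>SP. \<Sum>s\<in>{0..<n}. P i $$ (r,s) * sigma_pow sg i (u $ s)) $ r" using r by simp
  qed simp
qed

end

definition bnd :: "'a::field_gcd poly \<Rightarrow> nat \<Rightarrow> 'a ratfun \<Rightarrow> bool" where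
  "bnd g e x \<longleftrightarrow> (\<exists>a c. c \<noteq> 0 \<and> \<not> g dvd c \<and> x = polyK a / polyK (c * g ^ e))"

lemma polyK_frac_eq:
  assumes "y \<noteq> 0" "b \<noteq> 0" "polyK x / polyK y = polyK a / polyK b"
  shows "x * b = a * y"
proof -
  have "polyK x * polyK b = polyK a * polyK y" using assms by (simp add: frac_eq_eq)
  then have "polyK (x * b) = polyK (a * y)" by (simp only: polyK_simps(2))
  then show ?thesis by (simp only: polyK_simps(7))
qed

context
  fixes g :: "'a::field_gcd poly"
  assumes g: "prime_elem g"
begin

lemma gnz: "g \<noteq> 0" using g by auto

lemma bnd_zero: "bnd g e 0"
  unfolding bnd_def using g by (intro exI[of _ 0] exI[of _ 1]) (auto simp: prime_elem_def)

lemma bnd_poly: "bnd g 0 (polyK a)"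
  unfolding bnd_def using g by (intro exI[of _ a] exI[of _ 1]) (auto simp: prime_elem_def)

lemma bnd_mono: assumes "e \<le> e'" "bnd g e x" shows "bnd g e' x"
proof -
  obtain a c where ac: "c \<noteq> 0" "\<not> g dvd c" "x = polyK a / polyK (c * g ^ e)" using assms(2) by (auto simp: bnd_def)
  have e': "g ^ e' = g ^ e * g ^ (e' - e)" using assms(1) by (simp add: power_add[symmetric])
  have "x = polyK (a * g ^ (e' - e)) / polyK (c * g ^ e')"
    using ac gnz by (simp add: e' field_simps)
  then show ?thesis using ac unfolding bnd_def by blast
qed

lemma bnd_add: assumes "bnd g e x" "bnd g e y" shows "bnd g e (x + y)"
proof -
  obtain a c where ac: "c \<noteq> 0" "\<not> g dvd c" "x = polyK a / polyK (c * g ^ e)" using assms(1) by (auto simp: bnd_def)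
  obtain b d where bd: "d \<noteq> 0" "\<not> g dvd d" "y = polyK b / polyK (d * g ^ e)" using assms(2) by (auto simp: bnd_def)
  have "x + y = polyK (a * d + b * c) / polyK ((c * d) * g ^ e)"
    using ac bd gnz by (simp add: field_simps)
  moreover have "c * d \<noteq> 0" "\<not> g dvd c * d" using ac bd g by (auto simp: prime_elem_dvd_mult_iff)
  ultimately show ?thesis unfolding bnd_def by blast
qed

lemma bnd_uminus: assumes "bnd g e x" shows "bnd g e (- x)"
proof -
  obtain a c where ac: "c \<noteq> 0" "\<not> g dvd c" "x = polyK a / polyK (c * g ^ e)" using assms(1) by (auto simp: bnd_def)
  have "- x = polyK (- a) / polyK (c * g ^ e)" using ac by simp
  then show ?thesis using ac unfolding bnd_def by blast
qed

lemma bnd_diff: "bnd g e x \<Longrightarrow> bnd g e y \<Longrightarrow> bnd g e (x - y)"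
  using bnd_add[of e x "- y"] bnd_uminus[of e y] by simp

lemma bnd_mult: assumes "bnd g e x" "bnd g e' y" shows "bnd g (e + e') (x * y)"
proof -
  obtain a c where ac: "c \<noteq> 0" "\<not> g dvd c" "x = polyK a / polyK (c * g ^ e)" using assms(1) by (auto simp: bnd_def)
  obtain b d where bd: "d \<noteq> 0" "\<not> g dvd d" "y = polyK b / polyK (d * g ^ e')" using assms(2) by (auto simp: bnd_def)
  have "x * y = (polyK a * polyK b) / (polyK (c * g ^ e) * polyK (d * g ^ e'))"
    unfolding ac(3) bd(3) by (rule times_divide_times_eq)
  also have "\<dots> = polyK (a * b) / polyK ((c * d) * g ^ (e + e'))"
    by (simp only: polyK_simps(2)[symmetric]) (simp add: power_add mult_ac)
  finally have "x * y = polyK (a * b) / polyK ((c * d) * g ^ (e + e'))" .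
  moreover have "c * d \<noteq> 0" "\<not> g dvd c * d" using ac bd g by (auto simp: prime_elem_dvd_mult_iff)
  ultimately show ?thesis unfolding bnd_def by blast
qed

lemma bnd_sum: "(\<And>i. i \<in> S \<Longrightarrow> bnd g e (f i)) \<Longrightarrow> bnd g e (sum f S)"
proof (induct S rule: infinite_finite_induct)
  case (infinite A) then show ?case by (simp add: bnd_zero)
next
  case empty then show ?case by (simp add: bnd_zero)
next
  case (insert x F) then show ?case by (simp add: bnd_add)
qed

lemma bnd_frac: assumes "d \<noteq> 0" shows "bnd g (multiplicity g d) (polyK z / polyK d)"
proof -
  have "\<not> is_unit g" using g by (simp add: prime_elem_def)
  then obtain c where c: "d = g ^ multiplicity g d * c" "\<not> g dvd c"
    using multiplicity_decompose'[OF assms] by metis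
  then have "c \<noteq> 0" using assms by auto
  moreover have "polyK z / polyK d = polyK z / polyK (c * g ^ multiplicity g d)" using c by (simp add: mult.commute)
  ultimately show ?thesis using c unfolding bnd_def by blast
qed

lemma bnd_frac_dvd: assumes "d \<noteq> 0" "m \<noteq> 0" "d dvd m" shows "bnd g (multiplicity g m) (polyK z / polyK d)"
proof -
  obtain q where q: "m = d * q" using assms(3) by (auto elim: dvdE)
  then have "q \<noteq> 0" using assms by auto
  then have "polyK z / polyK d = polyK (z * q) / polyK m" using q assms by (simp add: field_simps)
  then show ?thesis using bnd_frac[OF assms(2), of "z * q"] by simp
qed

lemma bnd_extract:
  fixes z :: "'a poly vec"
  assumes d: "d \<noteq> 0" and red: "Gcd (insert d {z $ i | i. i < n}) = 1"
    and b: "\<And>i. i < n \<Longrightarrow> bnd g e (polyK (z $ i) / polyK d)"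
  shows "multiplicity g d \<le> e"
proof (rule ccontr)
  assume "\<not> multiplicity g d \<le> e"
  then have E: "multiplicity g d \<ge> Suc e" by simp
  have gd: "g ^ Suc e dvd d" using multiplicity_dvd'[OF E] .
  have gz: "g dvd z $ i" if i: "i < n" for i
  proof -
    obtain a c where ac: "c \<noteq> 0" "\<not> g dvd c" "polyK (z $ i) / polyK d = polyK a / polyK (c * g ^ e)"
      using b[OF i] by (auto simp: bnd_def)
    have "z $ i * (c * g ^ e) = a * d" using polyK_frac_eq[OF d _ ac(3)] ac(1) gnz by simp
    then have "g ^ e * g dvd (z $ i * c) * g ^ e" using gd by (metis dvd_mult mult.commute mult.left_commute power_Suc2)
    then have "g dvd z $ i * c" using gnz by (simp add: mult.commute)
    then show ?thesis using ac(2) g by (simp add: prime_elem_dvd_mult_iff)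
  qed
  have "g * g ^ e dvd d" using gd by simp
  then have "g dvd d" by (rule dvd_mult_left)
  then have "g dvd Gcd (insert d {z $ i | i. i < n})" using gz by (auto intro!: Gcd_greatest)
  then have "g dvd 1" by (simp only: red)
  then show False using g by (simp add: prime_elem_def)
qed

end

context pse begin

lemma bnd_sigma: assumes g: "prime_elem g" and b: "bnd g e x" shows "bnd (sp k g) e (sigma_pow sg k x)"
proof -
  obtain a c where ac: "c \<noteq> 0" "\<not> g dvd c" "x = polyK a / polyK (c * g ^ e)" using b by (auto simp: bnd_def)
  have "sigma_pow sg k x = polyK (sp k a) / polyK (sp k c * sp k g ^ e)"
  proof -
    interpret field_hom "sigma_pow sg k" by (rule fh_spw)
    show ?thesis by (simp only: ac(3) hom_div polyK_sp[symmetric] sp_hom(1) sp_hom(7))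
  qed
  moreover have "sp k c \<noteq> 0" "\<not> sp k g dvd sp k c" using ac by (auto simp: sp_dvd_iff)
  ultimately show ?thesis unfolding bnd_def by blast
qed

end

lemma common_denom_facts:
  assumes B: "B \<in> carrier_mat n n"
  shows "common_denom B \<noteq> 0" "\<And>i j. i < n \<Longrightarrow> j < n \<Longrightarrow> snd (quot_of_fract (B $$ (i,j))) dvd common_denom B"
proof -
  let ?S = "{snd (quot_of_fract (B $$ (i, j))) | i j. i < dim_row B \<and> j < dim_col B}"
  have "?S \<subseteq> (\<lambda>(i,j). snd (quot_of_fract (B $$ (i, j)))) ` ({0..<n} \<times> {0..<n})"
    using B by auto
  then have fin: "finite ?S" by (rule finite_subset) auto
  have "0 \<notin> ?S" by auto
  then show "common_denom B \<noteq> 0" using fin by (simp add: common_denom_def Lcm_0_iff)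
  show "snd (quot_of_fract (B $$ (i,j))) dvd common_denom B" if "i < n" "j < n" for i j
    unfolding common_denom_def using that B by (intro dvd_Lcm) auto
qed

lemma entry_bnd:
  assumes g: "prime_elem g" and B: "B \<in> carrier_mat n n" and ij: "i < n" "j < n"
  shows "bnd g (multiplicity g (common_denom B)) (B $$ (i,j))"
proof -
  have e: "B $$ (i,j) = polyK (fst (quot_of_fract (B $$ (i,j)))) / polyK (snd (quot_of_fract (B $$ (i,j))))"
    by (metis Fract_quot_of_fract Fract_conv_to_fract polyK_eq)
  show ?thesis
    by (subst e, rule bnd_frac_dvd[OF g]) (simp_all add: common_denom_facts[OF B] ij)
qed

lemma opm_polys:
  assumes "\<forall>i\<le>L. B i \<in> carrier_mat n n"
  shows "is_opmat n (opmat_of_polys n L B)" "{k. opmat_of_polys n L B k \<noteq> 0\<^sub>m n n} \<subseteq> {0..int L}"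
proof -
  show "{k. opmat_of_polys n L B k \<noteq> 0\<^sub>m n n} \<subseteq> {0..int L}"
    by (auto simp: opmat_of_polys_def split: if_splits)
  then show "is_opmat n (opmat_of_polys n L B)"
    unfolding is_opmat_def using assms by (auto simp: opmat_of_polys_def intro: finite_subset)
qed

lemma delta_sum: "r < n \<Longrightarrow> (\<Sum>c\<in>{0..<n}. (1\<^sub>m n :: 'b::field mat) $$ (r,c) * Y c) = Y r"
proof -
  assume r: "r < n"
  have "(\<Sum>c\<in>{0..<n}. (1\<^sub>m n :: 'b mat) $$ (r,c) * Y c) = (\<Sum>c\<in>{0..<n}. if r = c then Y c else 0)"
    using r by (intro sum.cong refl) auto
  also have "\<dots> = Y r" using r by simp
  finally show ?thesis .
qed

lemma inv_apply:
  assumes Bi: "Bi \<in> carrier_mat n n" and N: "N \<in> carrier_mat n n" and inv: "Bi * N = 1\<^sub>m n" and r: "r < n"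
  shows "(\<Sum>s\<in>{0..<n}. Bi $$ (r,s) * (\<Sum>c\<in>{0..<n}. N $$ (s,c) * Y c)) = (Y r :: 'b::field)"
proof -
  have "(\<Sum>s\<in>{0..<n}. Bi $$ (r,s) * (\<Sum>c\<in>{0..<n}. N $$ (s,c) * Y c))
      = (\<Sum>s\<in>{0..<n}. \<Sum>c\<in>{0..<n}. Bi $$ (r,s) * N $$ (s,c) * Y c)"
    by (simp add: sum_distrib_left mult.assoc)
  also have "\<dots> = (\<Sum>c\<in>{0..<n}. \<Sum>s\<in>{0..<n}. Bi $$ (r,s) * N $$ (s,c) * Y c)" by (rule sum.swap)
  also have "\<dots> = (\<Sum>c\<in>{0..<n}. (Bi * N) $$ (r,c) * Y c)"
  proof (rule sum.cong[OF refl])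
    fix c assume c: "c \<in> {0..<n}"
    have "(Bi * N) $$ (r,c) = (\<Sum>s\<in>{0..<n}. Bi $$ (r,s) * N $$ (s,c))"
      using Bi N r c by (simp add: scalar_prod_def)
    then show "(\<Sum>s\<in>{0..<n}. Bi $$ (r,s) * N $$ (s,c) * Y c) = (Bi * N) $$ (r,c) * Y c"
      by (simp add: sum_distrib_right)
  qed
  also have "\<dots> = Y r" unfolding inv using r by (rule delta_sum)
  finally show ?thesis .
qed

context pse begin

lemma bound_gen:
  fixes z bb :: "'a poly vec" and B :: "nat \<Rightarrow> 'a poly mat"
  assumes B_dim: "\<forall>i\<le>L. B i \<in> carrier_mat n n" and bb: "bb \<in> carrier_vec n" and j0: "j0 \<le> L"
    and Binv: "Binv \<in> carrier_mat n n" "map_mat polyK (B j0) * Binv = 1\<^sub>m n"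
    and z: "z \<in> carrier_vec n" and d: "d \<noteq> 0" and red: "Gcd (insert d {z $ i | i. i < n}) = 1"
    and sol: "opmat_apply sg n (opmat_of_polys n L B) (map_vec (\<lambda>q. polyK q / polyK d) z) = map_vec polyK bb"
    and g: "prime_elem g"
  shows "multiplicity (sp (- int j0) g) d \<le> multiplicity g (common_denom Binv)
           + Max (insert 0 ((\<lambda>k. multiplicity g (sp k d)) ` ({0..int L} - {int j0})))"
proof -
  define M where "M = opmat_of_polys n L B"
  define y where "y = map_vec (\<lambda>q. polyK q / polyK d) z"
  define E where "E = Max (insert 0 ((\<lambda>k. multiplicity g (sp k d)) ` ({0..int L} - {int j0})))"
  define K where "K = {0..int L}"
  have fK: "finite K" by (simp add: K_def)
  have j0K: "int j0 \<in> K" using j0 by (simp add: K_def)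
  have Mop: "is_opmat n M" and Msup: "{k. M k \<noteq> 0\<^sub>m n n} \<subseteq> K"
    using opm_polys[OF B_dim] by (simp_all add: M_def K_def)
  have yc: "y \<in> carrier_vec n" using z by (simp add: y_def)
  have ye: "y $ c = polyK (z $ c) / polyK d" if "c < n" for c using that z by (simp add: y_def)
  have Bk: "B (nat k) \<in> carrier_mat n n" if "k \<in> K" for k using that B_dim by (auto simp: K_def)
  have Me: "M k $$ (r,c) = polyK (B (nat k) $$ (r,c))" if "k \<in> K" "r < n" "c < n" for k r c
    using that Bk[OF that(1)] by (simp add: M_def opmat_of_polys_def K_def)
  define T where "T r k = (\<Sum>c\<in>{0..<n}. M k $$ (r,c) * sigma_pow sg k (y $ c))" for r k
  have eq: "polyK (bb $ r) = (\<Sum>k\<in>K. T r k)" if r: "r < n" for r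
  proof -
    have "opmat_apply sg n M y $ r = polyK (bb $ r)" using sol bb r by (simp add: M_def y_def)
    then show ?thesis using apply_S[OF Mop fK Msup yc] r by (simp add: T_def)
  qed
  have Emax: "multiplicity g (sp k d) \<le> E" if "k \<in> K - {int j0}" for k
    unfolding E_def using that by (intro Max_ge) (auto simp: K_def)
  have Tb: "bnd g E (T r k)" if "r < n" "k \<in> K - {int j0}" for r k
    unfolding T_def
  proof (rule bnd_sum[OF g])
    fix c assume c: "c \<in> {0..<n}"
    have "sigma_pow sg k (y $ c) = polyK (sp k (z $ c)) / polyK (sp k d)"
      using c by (simp add: ye spw_hom polyK_sp)
    then have "bnd g (multiplicity g (sp k d)) (sigma_pow sg k (y $ c))"
      using bnd_frac[OF g, of "sp k d"] d by simp
    then have "bnd g E (sigma_pow sg k (y $ c))" using bnd_mono[OF g Emax[OF that(2)]] by blast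
    then have "bnd g (0 + E) (M k $$ (r,c) * sigma_pow sg k (y $ c))"
      using bnd_mult[OF g bnd_poly[OF g]] Me[of k r c] that c by auto
    then show "bnd g E (M k $$ (r,c) * sigma_pow sg k (y $ c))" by simp
  qed
  have wb: "bnd g E (T s (int j0))" if s: "s < n" for s
  proof -
    have "T s (int j0) = polyK (bb $ s) - (\<Sum>k\<in>K - {int j0}. T s k)"
      using eq[OF s] sum.remove[OF fK j0K, of "T s"] by simp
    moreover have "bnd g E (polyK (bb $ s))" using bnd_mono[OF g _ bnd_poly[OF g]] by blast
    moreover have "bnd g E (\<Sum>k\<in>K - {int j0}. T s k)" using Tb[OF s] by (intro bnd_sum[OF g])
    ultimately show ?thesis using bnd_diff[OF g] by simp
  qed
  define Y where "Y c = sigma_pow sg (int j0) (y $ c)" for c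
  have Tj0: "T s (int j0) = (\<Sum>c\<in>{0..<n}. map_mat polyK (B j0) $$ (s,c) * Y c)" if "s < n" for s
    unfolding T_def Y_def using that B_dim j0 Me[OF j0K that] by (intro sum.cong refl) auto
  have Binv2: "Binv * map_mat polyK (B j0) = 1\<^sub>m n"
    using mat_mult_left_right_inverse[OF _ Binv(1) Binv(2)] B_dim j0 by auto
  have Yr: "Y r = (\<Sum>s\<in>{0..<n}. Binv $$ (r,s) * T s (int j0))" if r: "r < n" for r
    using inv_apply[OF Binv(1) _ Binv2 r, of Y] B_dim j0 Tj0 by simp
  have Yb: "bnd g (multiplicity g (common_denom Binv) + E) (Y r)" if r: "r < n" for r
    unfolding Yr[OF r]
    by (intro bnd_sum[OF g] bnd_mult[OF g] entry_bnd[OF g Binv(1) r] wb) auto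
  have "bnd (sp (- int j0) g) (multiplicity g (common_denom Binv) + E) (polyK (z $ r) / polyK d)"
    if r: "r < n" for r
  proof -
    have "sigma_pow sg (- int j0) (Y r) = y $ r" by (simp add: Y_def sp_add[symmetric])
    then show ?thesis using bnd_sigma[OF g Yb[OF r], of "- int j0"] ye[OF r] by simp
  qed
  then show ?thesis unfolding E_def[symmetric]
    by (intro bnd_extract[OF sp_prime_elem[OF g] d red]) auto
qed

end

lemma Max_ins_le: "finite A \<Longrightarrow> (\<And>x. x \<in> A \<Longrightarrow> x \<le> (b::nat)) \<Longrightarrow> Max (insert 0 A) \<le> b"
  by (simp add: Max_le_iff)

lemma comb_up:
  fixes e Mv :: "int \<Rightarrow> nat" and L :: int
  assumes h: "\<And>k. e k \<le> Mv k + Max (insert 0 ((\<lambda>s. e (k + s)) ` {1..L}))"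
    and z: "\<And>k. k > K \<Longrightarrow> e k = 0"
  shows "e k \<le> (\<Sum>i\<in>{k..K}. Mv i)"
proof (induct "nat (K - k)" arbitrary: k rule: less_induct)
  case less
  show ?case
  proof (cases "k > K")
    case True then show ?thesis using z by simp
  next
    case False
    have b: "e (k + s) \<le> (\<Sum>i\<in>{k+1..K}. Mv i)" if s: "s \<in> {1..L}" for s
    proof (cases "k + s > K")
      case True then show ?thesis using z by simp
    next
      case False
      have "e (k + s) \<le> (\<Sum>i\<in>{k+s..K}. Mv i)" using less[of "k + s"] s False by simp
      also have "\<dots> \<le> (\<Sum>i\<in>{k+1..K}. Mv i)" using s by (intro sum_mono2) auto
      finally show ?thesis .
    qed
    have "Max (insert 0 ((\<lambda>s. e (k + s)) ` {1..L})) \<le> (\<Sum>i\<in>{k+1..K}. Mv i)"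
      using b by (intro Max_ins_le) auto
    then have "e k \<le> Mv k + (\<Sum>i\<in>{k+1..K}. Mv i)" using h[of k] by linarith
    also have "\<dots> = (\<Sum>i\<in>{k..K}. Mv i)"
    proof -
      have "{k..K} = insert k {k+1..K}" using False by auto
      then show ?thesis by simp
    qed
    finally show ?thesis .
  qed
qed

lemma comb_down:
  fixes e Pv :: "int \<Rightarrow> nat" and L :: int
  assumes h: "\<And>k. e k \<le> Pv k + Max (insert 0 ((\<lambda>s. e (k - s)) ` {1..L}))"
    and z: "\<And>k. k < K \<Longrightarrow> e k = 0"
  shows "e k \<le> (\<Sum>i\<in>{K..k}. Pv i)"
proof (induct "nat (k - K)" arbitrary: k rule: less_induct)
  case less
  show ?case
  proof (cases "k < K")
    case True then show ?thesis using z by simp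
  next
    case False
    have b: "e (k - s) \<le> (\<Sum>i\<in>{K..k-1}. Pv i)" if s: "s \<in> {1..L}" for s
    proof (cases "k - s < K")
      case True then show ?thesis using z by simp
    next
      case False
      have "e (k - s) \<le> (\<Sum>i\<in>{K..k-s}. Pv i)" using less[of "k - s"] s False by simp
      also have "\<dots> \<le> (\<Sum>i\<in>{K..k-1}. Pv i)" using s by (intro sum_mono2) auto
      finally show ?thesis .
    qed
    have "Max (insert 0 ((\<lambda>s. e (k - s)) ` {1..L})) \<le> (\<Sum>i\<in>{K..k-1}. Pv i)"
      using b by (intro Max_ins_le) auto
    then have "e k \<le> Pv k + (\<Sum>i\<in>{K..k-1}. Pv i)" using h[of k] by linarith
    also have "\<dots> = (\<Sum>i\<in>{K..k}. Pv i)"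
    proof -
      have "{K..k} = insert k {K..k-1}" using False by auto
      then show ?thesis by simp
    qed
    finally show ?thesis .
  qed
qed

locale setting = pse sg for sg :: "'a::{field_char_0,field_gcd} ratfun \<Rightarrow> 'a ratfun" +
  fixes d m p :: "'a poly" and l lt :: nat
  assumes d: "d \<noteq> 0" and m: "m \<noteq> 0" and p: "p \<noteq> 0"
  and head: "\<And>g. prime_elem g \<Longrightarrow> multiplicity (sigma_poly sg (- int l) g) d \<le> multiplicity g m
      + Max (insert 0 ((\<lambda>k. multiplicity g (sigma_poly sg k d)) ` ({0..int l} - {int l})))"
  and tail: "\<And>g. prime_elem g \<Longrightarrow> multiplicity (sigma_poly sg (- int 0) g) d \<le> multiplicity g p
      + Max (insert 0 ((\<lambda>k. multiplicity g (sigma_poly sg k d)) ` ({0..int lt} - {int 0})))"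
begin

lemma e_head:
  assumes q: "prime_elem q"
  shows "multiplicity (sp k q) d \<le> multiplicity (sp (int l + k) q) m
          + Max (insert 0 ((\<lambda>s. multiplicity (sp (k + s) q) d) ` {1..int l}))"
proof -
  define g where "g = sp (int l + k) q"
  have g: "prime_elem g" using sp_prime_elem[OF q] by (simp add: g_def)
  have "sp (- int l) g = sp k q" by (simp add: g_def sp_comp add.commute)
  then have H: "multiplicity (sp k q) d \<le> multiplicity g m
      + Max (insert 0 ((\<lambda>k. multiplicity g (sp k d)) ` ({0..int l} - {int l})))"
    using head[OF g] by simp
  have sub: "insert 0 ((\<lambda>k. multiplicity g (sp k d)) ` ({0..int l} - {int l}))
     \<subseteq> insert 0 ((\<lambda>s. multiplicity (sp (k + s) q) d) ` {1..int l})"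
  proof
    fix x assume "x \<in> insert 0 ((\<lambda>k. multiplicity g (sp k d)) ` ({0..int l} - {int l}))"
    then consider "x = 0" | k' where "k' \<in> {0..int l} - {int l}" "x = multiplicity g (sp k' d)" by blast
    then show "x \<in> insert 0 ((\<lambda>s. multiplicity (sp (k + s) q) d) ` {1..int l})"
    proof cases
      case 2
      have "g = sp k' (sp (k + (int l - k')) q)" by (simp add: g_def sp_comp add.commute)
      then have "x = multiplicity (sp (k + (int l - k')) q) d" using 2 by (simp add: sp_multiplicity)
      moreover have "int l - k' \<in> {1..int l}" using 2 by auto
      ultimately show ?thesis by blast
    qed simp
  qed
  have Mm: "Max (insert 0 ((\<lambda>k. multiplicity g (sp k d)) ` ({0..int l} - {int l})))
     \<le> Max (insert 0 ((\<lambda>s. multiplicity (sp (k + s) q) d) ` {1..int l}))"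
    by (rule Max_mono[OF sub]) auto
  show ?thesis using le_trans[OF H add_left_mono[OF Mm]] by (simp only: g_def)
qed

lemma e_tail:
  assumes q: "prime_elem q"
  shows "multiplicity (sp k q) d \<le> multiplicity (sp k q) p
          + Max (insert 0 ((\<lambda>s. multiplicity (sp (k - s) q) d) ` {1..int lt}))"
proof -
  define g where "g = sp k q"
  have g: "prime_elem g" using sp_prime_elem[OF q] by (simp add: g_def)
  have H: "multiplicity (sp k q) d \<le> multiplicity g p
      + Max (insert 0 ((\<lambda>k. multiplicity g (sp k d)) ` ({0..int lt} - {0})))"
    using tail[OF g] by (simp add: g_def)
  have sub: "insert 0 ((\<lambda>k. multiplicity g (sp k d)) ` ({0..int lt} - {0}))
     \<subseteq> insert 0 ((\<lambda>s. multiplicity (sp (k - s) q) d) ` {1..int lt})"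
  proof
    fix x assume "x \<in> insert 0 ((\<lambda>k. multiplicity g (sp k d)) ` ({0..int lt} - {0}))"
    then consider "x = 0" | k' where "k' \<in> {0..int lt} - {0}" "x = multiplicity g (sp k' d)" by blast
    then show "x \<in> insert 0 ((\<lambda>s. multiplicity (sp (k - s) q) d) ` {1..int lt})"
    proof cases
      case 2
      have "g = sp k' (sp (k - k') q)" by (simp add: g_def sp_comp)
      then have "x = multiplicity (sp (k - k') q) d" using 2 by (simp add: sp_multiplicity)
      moreover have "k' \<in> {1..int lt}" using 2 by auto
      ultimately show ?thesis by blast
    qed simp
  qed
  have Mm: "Max (insert 0 ((\<lambda>k. multiplicity g (sp k d)) ` ({0..int lt} - {0})))
     \<le> Max (insert 0 ((\<lambda>s. multiplicity (sp (k - s) q) d) ` {1..int lt}))"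
    by (rule Max_mono[OF sub]) auto
  show ?thesis using le_trans[OF H add_left_mono[OF Mm]] by (simp only: g_def)
qed

lemma orbit_finite:
  assumes q: "prime_elem q" "nt q"
  shows "finite {k. sp k q dvd d}"
proof -
  let ?S = "{k. sp k q dvd d}"
  let ?f = "\<lambda>k. normalize (sp k q)"
  have "?f ` ?S \<subseteq> prime_factors d"
    using d sp_prime_elem[OF q(1)] by (auto simp: in_prime_factors_iff)
  then have fin: "finite (?f ` ?S)" by (rule finite_subset) simp
  have "inj_on ?f ?S"
  proof (rule inj_onI)
    fix a b assume "normalize (sp a q) = normalize (sp b q)"
    then have "sp a q dvd normalize (sp b q)" by (metis dvd_refl normalize_dvd_iff)
    then have "sp a q dvd sp b q" by simp
    then have "sp (-a) (sp a q) dvd sp (-a) (sp b q)" by (rule sp_dvd)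
    then have "q dvd sp (b - a) q" by (simp add: sp_comp)
    then have "b - a = 0" by (rule aperiodic[OF q])
    then show "a = b" by simp
  qed
  then show ?thesis using fin by (rule finite_imageD[rotated])
qed

lemma orbit:
  assumes q: "prime_elem q" "nt q" "q dvd d"
  obtains Kmin Kmax where "Kmin \<le> 0" "0 \<le> Kmax"
    "multiplicity q d \<le> (\<Sum>i\<in>{0..Kmax}. multiplicity (sp (int l + i) q) m)"
    "multiplicity q d \<le> (\<Sum>i\<in>{Kmin..0}. multiplicity (sp i q) p)"
    "nat (Kmax - Kmin) \<in> spread sg (sp (- int l) (ap sg m)) (ap sg p)"
    "\<And>k. sp k q dvd d \<Longrightarrow> Kmin \<le> k \<and> k \<le> Kmax"
proof -
  define S where "S = {k. sp k q dvd d}"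
  have fS: "finite S" using orbit_finite[OF q(1,2)] by (simp add: S_def)
  have S0: "0 \<in> S" using q(3) by (simp add: S_def)
  define Kmax where "Kmax = Max S"
  define Kmin where "Kmin = Min S"
  have inS: "Kmin \<le> k \<and> k \<le> Kmax" if "k \<in> S" for k
    using that fS by (simp add: Kmax_def Kmin_def)
  have Sne: "S \<noteq> {}" using S0 by auto
  have KmaxS: "Kmax \<in> S" and KminS: "Kmin \<in> S" using Max_in[OF fS Sne] Min_in[OF fS Sne] by (auto simp: Kmax_def Kmin_def)
  define e where "e k = multiplicity (sp k q) d" for k
  have ez: "e k = 0" if "k \<notin> S" for k using that by (simp add: e_def S_def not_dvd_imp_multiplicity_0)
  have epos: "e k > 0" if "k \<in> S" for k
    using that d sp_prime_elem[OF q(1)] by (simp add: e_def S_def prime_multiplicity_gt_zero_iff)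
  define Mv where "Mv k = multiplicity (sp (int l + k) q) m" for k
  define Pv where "Pv k = multiplicity (sp k q) p" for k
  have up: "e k \<le> (\<Sum>i\<in>{k..Kmax}. Mv i)" for k
  proof (rule comb_up[of e Mv "int l" Kmax k])
    show "e k \<le> Mv k + Max (insert 0 ((\<lambda>s. e (k + s)) ` {1..int l}))" for k
      using e_head[OF q(1), of k] by (simp add: e_def Mv_def)
    show "e k = 0" if "Kmax < k" for k using that inS ez by force
  qed
  have down: "e k \<le> (\<Sum>i\<in>{Kmin..k}. Pv i)" for k
  proof (rule comb_down[of e Pv "int lt" Kmin k])
    show "e k \<le> Pv k + Max (insert 0 ((\<lambda>s. e (k - s)) ` {1..int lt}))" for k
      using e_tail[OF q(1), of k] by (simp add: e_def Pv_def)
    show "e k = 0" if "k < Kmin" for k using that inS ez by force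
  qed
  have e0: "e 0 = multiplicity q d" by (simp add: e_def)
  have "0 < e Kmax" using epos[OF KmaxS] .
  also have "e Kmax \<le> Mv Kmax" using up[of Kmax] by simp
  finally have "sp (int l + Kmax) q dvd m"
    using m sp_prime_elem[OF q(1)] by (simp add: Mv_def prime_multiplicity_gt_zero_iff)
  then have "sp (int l + Kmax) q dvd ap sg m"
    using m sp_prime_elem[OF q(1)] nt_sp[OF q(2)] ap_nz[OF m]
    by (metis mult_ap prime_multiplicity_gt_zero_iff)
  then have "sp (- int l) (sp (int l + Kmax) q) dvd sp (- int l) (ap sg m)" by (rule sp_dvd)
  then have A: "sp Kmax q dvd sp (- int l) (ap sg m)" by (simp add: sp_comp)
  have "0 < e Kmin" using epos[OF KminS] .
  also have "e Kmin \<le> Pv Kmin" using down[of Kmin] by simp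
  finally have "sp Kmin q dvd p"
    using p sp_prime_elem[OF q(1)] by (simp add: Pv_def prime_multiplicity_gt_zero_iff)
  then have "sp Kmin q dvd ap sg p"
    using p sp_prime_elem[OF q(1)] nt_sp[OF q(2)] ap_nz[OF p]
    by (metis mult_ap prime_multiplicity_gt_zero_iff)
  then have "sp (Kmax - Kmin) (sp Kmin q) dvd sp (Kmax - Kmin) (ap sg p)" by (rule sp_dvd)
  moreover have "Kmin \<le> Kmax" using inS[OF S0] by simp
  ultimately have B: "sp Kmax q dvd sp (int (nat (Kmax - Kmin))) (ap sg p)" by (simp add: sp_comp)
  have G: "sp Kmax q dvd gcd (sp (- int l) (ap sg m)) (sp (int (nat (Kmax - Kmin))) (ap sg p))"
    using A B by (rule gcd_greatest)
  have gnz: "gcd (sp (- int l) (ap sg m)) (sp (int (nat (Kmax - Kmin))) (ap sg p)) \<noteq> 0"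
    using ap_nz[OF m] by simp
  have "\<not> is_unit (gcd (sp (- int l) (ap sg m)) (sp (int (nat (Kmax - Kmin))) (ap sg p)))"
    using G sp_prime_elem[OF q(1), of Kmax] by (metis dvd_trans prime_elem_def)
  then have "degree (gcd (sp (- int l) (ap sg m)) (sp (int (nat (Kmax - Kmin))) (ap sg p))) \<noteq> 0"
    using is_unit_iff_degree[OF gnz] by blast
  then have sp: "nat (Kmax - Kmin) \<in> spread sg (sp (- int l) (ap sg m)) (ap sg p)"
    unfolding spread_def mem_Collect_eq .
  show ?thesis
  proof (rule that)
    show "Kmin \<le> 0" "0 \<le> Kmax" using inS[OF S0] by auto
    show "multiplicity q d \<le> (\<Sum>i\<in>{0..Kmax}. multiplicity (sp (int l + i) q) m)"
      using up[of 0] e0 by (simp add: Mv_def)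
    show "multiplicity q d \<le> (\<Sum>i\<in>{Kmin..0}. multiplicity (sp i q) p)"
      using down[of 0] e0 by (simp add: Pv_def)
    show "nat (Kmax - Kmin) \<in> spread sg (sp (- int l) (ap sg m)) (ap sg p)" by (rule sp)
    show "Kmin \<le> k \<and> k \<le> Kmax" if "sp k q dvd d" for k using that inS by (simp add: S_def)
  qed
qed

end

lemma sum_int_nat: "0 \<le> K \<Longrightarrow> (\<Sum>i\<in>{0..K}. f i) = (\<Sum>j\<in>{0..nat K}. f (int j))"
proof -
  assume K: "0 \<le> K"
  have "int ` {0..nat K} = {0..K}"
  proof
    show "int ` {0..nat K} \<subseteq> {0..K}" using K by auto
    show "{0..K} \<subseteq> int ` {0..nat K}"
    proof
      fix x assume "x \<in> {0..K}"
      then have "x = int (nat x)" "nat x \<in> {0..nat K}" by auto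
      then show "x \<in> int ` {0..nat K}" by (rule image_eqI)
    qed
  qed
  moreover have "sum f (int ` {0..nat K}) = sum (f \<circ> int) {0..nat K}" by (rule sum.reindex) simp
  ultimately show ?thesis by simp
qed

lemma sum_int_nat_neg: "K \<le> 0 \<Longrightarrow> (\<Sum>i\<in>{K..0}. f i) = (\<Sum>j\<in>{0..nat (- K)}. f (- int j))"
proof -
  assume K: "K \<le> 0"
  have "(\<lambda>j. - int j) ` {0..nat (- K)} = {K..0}"
  proof
    show "(\<lambda>j. - int j) ` {0..nat (- K)} \<subseteq> {K..0}" using K by auto
    show "{K..0} \<subseteq> (\<lambda>j. - int j) ` {0..nat (- K)}"
    proof
      fix x assume "x \<in> {K..0}"
      then have "x = - int (nat (- x))" "nat (- x) \<in> {0..nat (- K)}" by auto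
      then show "x \<in> (\<lambda>j. - int j) ` {0..nat (- K)}" by (rule image_eqI)
    qed
  qed
  moreover have "sum f ((\<lambda>j. - int j) ` {0..nat (- K)}) = sum (f \<circ> (\<lambda>j. - int j)) {0..nat (- K)}"
    by (rule sum.reindex) (simp add: inj_on_def)
  ultimately show ?thesis by (simp add: comp_def)
qed


theorem theorem2:
  fixes sg :: "'a::{field_char_0,field_gcd} ratfun \<Rightarrow> 'a ratfun"
    and n l lt :: nat
    and A At :: "nat \<Rightarrow> 'a poly mat"
    and b bt z :: "'a poly vec"
    and d :: "'a poly"
    and P :: "'a opmat"
    and Ainv Atinv :: "'a ratfun mat"
  assumes ext: "PiSigma_ext sg"
    and A_dim: "\<forall>i\<le>l. A i \<in> carrier_mat n n"
    and b_dim: "b \<in> carrier_vec n"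
    and full_reg: "fully_regular sg n l (opmat_of_polys n l A)"
    and P_unimod: "unimodular sg n P"
    and At_dim: "\<forall>i\<le>lt. At i \<in> carrier_mat n n"
    and PA: "opmat_mult sg n P (opmat_of_polys n l A) = opmat_of_polys n lt At"
    and bt_dim: "bt \<in> carrier_vec n"
    and Pb: "opmat_apply sg n P (map_vec polyK b) = map_vec polyK bt"
    and At0: "det (map_mat polyK (At 0)) \<noteq> 0"
    and Ainv: "Ainv \<in> carrier_mat n n" "map_mat polyK (A l) * Ainv = 1\<^sub>m n"
    and Atinv: "Atinv \<in> carrier_mat n n" "map_mat polyK (At 0) * Atinv = 1\<^sub>m n"
    and z_dim: "z \<in> carrier_vec n"
    and d_nz: "d \<noteq> 0"
    and reduced: "Gcd (insert d {z $ i | i. i < n}) = 1"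
    and sol: "opmat_apply sg n (opmat_of_polys n l A)
                (map_vec (\<lambda>q. polyK q / polyK d) z) = map_vec polyK b"
  shows "let m = common_denom Ainv; p = common_denom Atinv;
             D = disp sg (sigma_poly sg (- int l) (ap sg m)) (ap sg p)
         in disp sg (ap sg d) (ap sg d) \<le> D \<and>
            (D \<noteq> \<infinity> \<longrightarrow>
              ap sg d dvd gcd (\<Prod>j\<in>{j::nat. ereal (real j) \<le> D}. sigma_poly sg (- int l - int j) (ap sg m))
                               (\<Prod>j\<in>{j::nat. ereal (real j) \<le> D}. sigma_poly sg (int j) (ap sg p)))"
proof -
  interpret pse sg using ext by (rule pse.intro)
  have Mop: "is_opmat n (opmat_of_polys n l A)" using opm_polys[OF A_dim] by simp
  have Pop: "is_opmat n P" using P_unimod by (simp add: unimodular_def)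
  define y where "y = map_vec (\<lambda>q. polyK q / polyK d) z"
  have yc: "y \<in> carrier_vec n" using z_dim by (simp add: y_def)
  have sol2: "opmat_apply sg n (opmat_of_polys n lt At) (map_vec (\<lambda>q. polyK q / polyK d) z) = map_vec polyK bt"
  proof -
    have "opmat_apply sg n (opmat_of_polys n lt At) y = opmat_apply sg n (opmat_mult sg n P (opmat_of_polys n l A)) y"
      by (simp add: PA)
    also have "\<dots> = opmat_apply sg n P (opmat_apply sg n (opmat_of_polys n l A) y)"
      by (rule apply_mult[OF Pop Mop yc])
    also have "\<dots> = map_vec polyK bt" using sol Pb by (simp add: y_def)
    finally show ?thesis by (simp add: y_def)
  qed
  define m where "m = common_denom Ainv"
  define p where "p = common_denom Atinv"
  have mnz: "m \<noteq> 0" using common_denom_facts(1)[OF Ainv(1)] by (simp add: m_def)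
  have pnz: "p \<noteq> 0" using common_denom_facts(1)[OF Atinv(1)] by (simp add: p_def)
  have head: "multiplicity (sp (- int l) g) d \<le> multiplicity g m
      + Max (insert 0 ((\<lambda>k. multiplicity g (sp k d)) ` ({0..int l} - {int l})))" if g: "prime_elem g" for g
    unfolding m_def by (rule bound_gen[OF A_dim b_dim le_refl Ainv z_dim d_nz reduced sol g])
  have tail: "multiplicity (sp (- int 0) g) d \<le> multiplicity g p
      + Max (insert 0 ((\<lambda>k. multiplicity g (sp k d)) ` ({0..int lt} - {int 0})))" if g: "prime_elem g" for g
    unfolding p_def by (rule bound_gen[OF At_dim bt_dim _ Atinv z_dim d_nz reduced sol2 g]) simp
  interpret setting sg d m p l lt
    by (rule setting.intro, unfold_locales) (use d_nz mnz pnz head tail in auto)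
  define D where "D = disp sg (sp (- int l) (ap sg m)) (ap sg p)"
  have Dup: "ereal (real k) \<le> D" if "k \<in> spread sg (sp (- int l) (ap sg m)) (ap sg p)" for k
    unfolding D_def disp_def using that by (intro Sup_upper) auto
  have ntq: "nt q" if q: "prime_elem q" "q dvd ap sg d" for q
  proof (unfold nt_def, rule notI)
    assume a: "is_Pi sg \<and> q dvd tt"
    have "tt dvd q" using prime_elem_dvd_prime_elem[OF q(1) prime_elem_linear_field_poly] a by simp
    then have "tt dvd ap sg d" using q(2) by (rule dvd_trans)
    then show False using ap_not_t[OF _ d_nz] a by simp
  qed
  have apdd: "ap sg d dvd d" by (rule ap_dvd[OF d_nz])
  have part1: "disp sg (ap sg d) (ap sg d) \<le> D"
    unfolding disp_def
  proof (rule Sup_least)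
    fix x assume "x \<in> (\<lambda>k. ereal (real k)) ` spread sg (ap sg d) (ap sg d)"
    then obtain k where k: "k \<in> spread sg (ap sg d) (ap sg d)" and x: "x = ereal (real k)" by blast
    let ?G = "gcd (ap sg d) (sp (int k) (ap sg d))"
    have Gnz: "?G \<noteq> 0" using ap_nz[OF d_nz] gcd_eq_0_iff by blast
    have "degree ?G \<noteq> 0" using k unfolding spread_def by blast
    then have nu: "\<not> is_unit ?G" unfolding is_unit_iff_degree[OF Gnz] .
    obtain q0 where q0: "prime q0" "q0 dvd ?G" by (rule prime_divisorE[OF Gnz nu])
    have q0a: "q0 dvd ap sg d" "q0 dvd sp (int k) (ap sg d)"
      using dvd_trans[OF q0(2) gcd_dvd1] dvd_trans[OF q0(2) gcd_dvd2] by auto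
    define q where "q = sp (- int k) q0"
    have qp: "prime_elem q" using sp_prime_elem q0(1) by (simp add: q_def prime_imp_prime_elem)
    have "sp (- int k) q0 dvd sp (- int k) (sp (int k) (ap sg d))" using q0a(2) by (rule sp_dvd)
    then have qa: "q dvd ap sg d" by (simp add: q_def)
    have qd: "q dvd d" using qa apdd by (rule dvd_trans)
    obtain Kmin Kmax where K: "Kmin \<le> 0" "0 \<le> Kmax"
      "multiplicity q d \<le> (\<Sum>i\<in>{0..Kmax}. multiplicity (sp (int l + i) q) m)"
      "multiplicity q d \<le> (\<Sum>i\<in>{Kmin..0}. multiplicity (sp i q) p)"
      "nat (Kmax - Kmin) \<in> spread sg (sp (- int l) (ap sg m)) (ap sg p)"
      "\<And>k. sp k q dvd d \<Longrightarrow> Kmin \<le> k \<and> k \<le> Kmax"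
      by (rule orbit[OF qp ntq[OF qp qa] qd]) (rule that)
    have "sp (int k) q = q0" by (simp add: q_def sp_comp)
    then have "sp (int k) q dvd d" using dvd_trans[OF q0a(1) apdd] by simp
    then have "int k \<le> Kmax" using K(6) by blast
    then have "real k \<le> real (nat (Kmax - Kmin))" using K(1) by linarith
    then have "x \<le> ereal (real (nat (Kmax - Kmin)))" using x by simp
    also have "\<dots> \<le> D" using Dup[OF K(5)] .
    finally show "x \<le> D" .
  qed
  have Jfin: "finite {j::nat. ereal (real j) \<le> D}" if Dinf: "D \<noteq> \<infinity>"
  proof -
    obtain r where r: "D \<le> ereal r" using Dinf by (cases D) auto
    have "{j::nat. ereal (real j) \<le> D} \<subseteq> {..nat \<lceil>r\<rceil>}"
    proof
      fix j assume "j \<in> {j::nat. ereal (real j) \<le> D}"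
      then have "ereal (real j) \<le> ereal r" using r order_trans by blast
      then have "real j \<le> r" by simp
      then have "int j \<le> \<lceil>r\<rceil>" by linarith
      then show "j \<in> {..nat \<lceil>r\<rceil>}" by simp
    qed
    then show ?thesis by (rule finite_subset) simp
  qed
  show ?thesis
    unfolding Let_def m_def[symmetric] p_def[symmetric] D_def[symmetric]
  proof (intro conjI impI)
    show "disp sg (ap sg d) (ap sg d) \<le> D" by (rule part1)
    assume Dinf: "D \<noteq> \<infinity>"
    define J where "J = {j::nat. ereal (real j) \<le> D}"
    have fJ: "finite J" using Jfin[OF Dinf] by (simp add: J_def)
    define X where "X = (\<Prod>j\<in>J. sp (- int l - int j) (ap sg m))"
    define Y where "Y = (\<Prod>j\<in>J. sp (int j) (ap sg p))"
    have inJ: "j \<in> J" if "real j \<le> real (nat (Kmax - Kmin))" "nat (Kmax - Kmin) \<in> spread sg (sp (- int l) (ap sg m)) (ap sg p)" for j Kmin Kmax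
    proof -
      have "ereal (real j) \<le> ereal (real (nat (Kmax - Kmin)))" using that(1) by simp
      also have "\<dots> \<le> D" using Dup[OF that(2)] .
      finally show ?thesis by (simp add: J_def)
    qed
    have dX: "ap sg d dvd X"
    proof (rule multiplicity_le_imp_dvd[OF ap_nz[OF d_nz]])
      fix q :: "'a poly" assume q: "prime q"
      show "multiplicity q (ap sg d) \<le> multiplicity q X"
      proof (cases "q dvd ap sg d")
        case False then show ?thesis by (simp add: not_dvd_imp_multiplicity_0)
      next
        case True
        have qp: "prime_elem q" using q by simp
        have nq: "nt q" by (rule ntq[OF qp True])
        have qd: "q dvd d" using True apdd by (rule dvd_trans)
        obtain Kmin Kmax where K: "Kmin \<le> 0" "0 \<le> Kmax"
          "multiplicity q d \<le> (\<Sum>i\<in>{0..Kmax}. multiplicity (sp (int l + i) q) m)"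
          "multiplicity q d \<le> (\<Sum>i\<in>{Kmin..0}. multiplicity (sp i q) p)"
          "nat (Kmax - Kmin) \<in> spread sg (sp (- int l) (ap sg m)) (ap sg p)"
          "\<And>k. sp k q dvd d \<Longrightarrow> Kmin \<le> k \<and> k \<le> Kmax"
          by (rule orbit[OF qp nq qd]) (rule that)
        have "multiplicity q (ap sg d) = multiplicity q d" by (rule mult_ap[OF qp nq d_nz])
        also have "\<dots> \<le> (\<Sum>i\<in>{0..Kmax}. multiplicity (sp (int l + i) q) m)" by (rule K(3))
        also have "\<dots> = (\<Sum>j\<in>{0..nat Kmax}. multiplicity (sp (int l + int j) q) m)"
          by (rule sum_int_nat[OF K(2)])
        also have "\<dots> \<le> (\<Sum>j\<in>J. multiplicity (sp (int l + int j) q) m)"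
        proof (rule sum_mono2[OF fJ])
          show "{0..nat Kmax} \<subseteq> J"
          proof
            fix j assume "j \<in> {0..nat Kmax}"
            then have "real j \<le> real (nat (Kmax - Kmin))" using K(1) by auto
            then show "j \<in> J" using inJ K(5) by blast
          qed
        qed simp
        also have "\<dots> = (\<Sum>j\<in>J. multiplicity q (sp (- int l - int j) (ap sg m)))"
        proof (rule sum.cong[OF refl])
          fix j
          have "multiplicity (sp (int l + int j) q) m = multiplicity (sp (int l + int j) q) (ap sg m)"
            using mult_ap[OF sp_prime_elem[OF qp] nt_sp[OF nq] mnz] by simp
          also have "\<dots> = multiplicity (sp (int l + int j) q) (sp (int l + int j) (sp (- int l - int j) (ap sg m)))"
            by (simp add: sp_comp)
          also have "\<dots> = multiplicity q (sp (- int l - int j) (ap sg m))" by (rule sp_multiplicity)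
          finally show "multiplicity (sp (int l + int j) q) m = multiplicity q (sp (- int l - int j) (ap sg m))" .
        qed
        also have "\<dots> = multiplicity q X" unfolding X_def
          by (rule prime_elem_multiplicity_prod_distrib[symmetric]) (use qp fJ ap_nz[OF mnz] in auto)
        finally show ?thesis .
      qed
    qed
    have dY: "ap sg d dvd Y"
    proof (rule multiplicity_le_imp_dvd[OF ap_nz[OF d_nz]])
      fix q :: "'a poly" assume q: "prime q"
      show "multiplicity q (ap sg d) \<le> multiplicity q Y"
      proof (cases "q dvd ap sg d")
        case False then show ?thesis by (simp add: not_dvd_imp_multiplicity_0)
      next
        case True
        have qp: "prime_elem q" using q by simp
        have nq: "nt q" by (rule ntq[OF qp True])
        have qd: "q dvd d" using True apdd by (rule dvd_trans)
        obtain Kmin Kmax where K: "Kmin \<le> 0" "0 \<le> Kmax"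
          "multiplicity q d \<le> (\<Sum>i\<in>{0..Kmax}. multiplicity (sp (int l + i) q) m)"
          "multiplicity q d \<le> (\<Sum>i\<in>{Kmin..0}. multiplicity (sp i q) p)"
          "nat (Kmax - Kmin) \<in> spread sg (sp (- int l) (ap sg m)) (ap sg p)"
          "\<And>k. sp k q dvd d \<Longrightarrow> Kmin \<le> k \<and> k \<le> Kmax"
          by (rule orbit[OF qp nq qd]) (rule that)
        have "multiplicity q (ap sg d) = multiplicity q d" by (rule mult_ap[OF qp nq d_nz])
        also have "\<dots> \<le> (\<Sum>i\<in>{Kmin..0}. multiplicity (sp i q) p)" by (rule K(4))
        also have "\<dots> = (\<Sum>j\<in>{0..nat (- Kmin)}. multiplicity (sp (- int j) q) p)"
          by (rule sum_int_nat_neg[OF K(1)])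
        also have "\<dots> \<le> (\<Sum>j\<in>J. multiplicity (sp (- int j) q) p)"
        proof (rule sum_mono2[OF fJ])
          show "{0..nat (- Kmin)} \<subseteq> J"
          proof
            fix j assume "j \<in> {0..nat (- Kmin)}"
            then have "real j \<le> real (nat (Kmax - Kmin))" using K(2) by auto
            then show "j \<in> J" using inJ K(5) by blast
          qed
        qed simp
        also have "\<dots> = (\<Sum>j\<in>J. multiplicity q (sp (int j) (ap sg p)))"
        proof (rule sum.cong[OF refl])
          fix j
          have "multiplicity (sp (- int j) q) p = multiplicity (sp (- int j) q) (ap sg p)"
            using mult_ap[OF sp_prime_elem[OF qp] nt_sp[OF nq] pnz] by simp
          also have "\<dots> = multiplicity (sp (- int j) q) (sp (- int j) (sp (int j) (ap sg p)))"
            by (simp add: sp_comp)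
          also have "\<dots> = multiplicity q (sp (int j) (ap sg p))" by (rule sp_multiplicity)
          finally show "multiplicity (sp (- int j) q) p = multiplicity q (sp (int j) (ap sg p))" .
        qed
        also have "\<dots> = multiplicity q Y" unfolding Y_def
          by (rule prime_elem_multiplicity_prod_distrib[symmetric]) (use qp fJ ap_nz[OF pnz] in auto)
        finally show ?thesis .
      qed
    qed
    show "ap sg d dvd gcd (\<Prod>j\<in>{j. ereal (real j) \<le> D}. sp (- int l - int j) (ap sg m))
                             (\<Prod>j\<in>{j. ereal (real j) \<le> D}. sp (int j) (ap sg p))"
      using gcd_greatest[OF dX dY] by (simp add: X_def Y_def J_def)
  qed
qed

end
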